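(* Let $F$ be a finite field of odd characteristic in which $-1$ is not a square, fix $C_0\ge1$, let $m\ge1$, and let $A,B\subseteq F^2$ with $m/2\le|A|,|B|\le 2m$ be such that either both $A$ and $B$ are $k$-regular (with constant $C_0$) for the same $k$, or both $A$ and $B$ are irregular. Then $$\min\Big\{|F|\big(\mathcal{R}(A)\mathcal{R}(B)\big)^{1/2},\ \mathcal{T}(A,B)\Big\}\lesssim m^{8/3}|F|^{2/3}+m^{7/2},$$ with implied constant depending only on $C_0$.
   Context: $x\cdot y=x_1y_1+x_2y_2$ on $F^2$. $(x_0,x_1,x_2)$ is a corner if $(x_1-x_0)\cdot(x_2-x_1)=0$; $(x_0,x_1,x_2,x_3)$ is a rectangle if each $(x_i,x_{i+1},x_{i+2})$, indices mod 4, is a corner; $\mathcal{R}(A)$ is the number of rectangles in $A^4$. $(x_1,x_2,x_3,x_4)$ is a trapezoid if $x_1-x_2=\lambda(x_3-x_4)$ for some $\lambda\in F$; $\mathcal{T}(A,B)$ is the number of trapezoids with $x_1,x_2\in A$, $x_3,x_4\in B$. A line is $\{p+tv:t\in F\}$, $v\ne0$. $A$ is $k$-regular (with constant $C_0$) if $k\le C_0|A|^{1/2}$ and there exist a set $L$ of lines with $k/C_0\le|L|\le C_0k$ and a partition $A=\bigsqcup_{\ell\in L}A_\ell$, $A_\ell\subseteq\ell$, with $|A|/(C_0k)\le|A_\ell|\le C_0|A|/k$ for each $\ell$. $A$ is irregular if $|\ell\cap A|\le|A|^{1/2}$ for every line $\ell$. *)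

theory Defs
  imports "HOL-Algebra.Ring" "HOL-Library.Disjoint_Sets" Complex_Main
begin

definition pdot :: "('a, 'b) ring_scheme \<Rightarrow> 'a \<times> 'a \<Rightarrow> 'a \<times> 'a \<Rightarrow> 'a" where
  "pdot R x y = (fst x \<otimes>\<^bsub>R\<^esub> fst y) \<oplus>\<^bsub>R\<^esub> (snd x \<otimes>\<^bsub>R\<^esub> snd y)"

definition psub :: "('a, 'b) ring_scheme \<Rightarrow> 'a \<times> 'a \<Rightarrow> 'a \<times> 'a \<Rightarrow> 'a \<times> 'a" where
  "psub R x y = (fst x \<ominus>\<^bsub>R\<^esub> fst y, snd x \<ominus>\<^bsub>R\<^esub> snd y)"

definition is_corner :: "('a, 'b) ring_scheme \<Rightarrow> 'a \<times> 'a \<Rightarrow> 'a \<times> 'a \<Rightarrow> 'a \<times> 'a \<Rightarrow> bool" where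
  "is_corner R x0 x1 x2 \<longleftrightarrow> pdot R (psub R x1 x0) (psub R x2 x1) = \<zero>\<^bsub>R\<^esub>"

definition is_rectangle :: "('a, 'b) ring_scheme \<Rightarrow> 'a \<times> 'a \<Rightarrow> 'a \<times> 'a \<Rightarrow> 'a \<times> 'a \<Rightarrow> 'a \<times> 'a \<Rightarrow> bool" where
  "is_rectangle R x0 x1 x2 x3 \<longleftrightarrow>
     is_corner R x0 x1 x2 \<and> is_corner R x1 x2 x3 \<and> is_corner R x2 x3 x0 \<and> is_corner R x3 x0 x1"

definition rect_count :: "('a, 'b) ring_scheme \<Rightarrow> ('a \<times> 'a) set \<Rightarrow> nat" where
  "rect_count R A = card {(x0, x1, x2, x3). x0 \<in> A \<and> x1 \<in> A \<and> x2 \<in> A \<and> x3 \<in> A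
                                            \<and> is_rectangle R x0 x1 x2 x3}"

definition is_trapezoid :: "('a, 'b) ring_scheme \<Rightarrow> 'a \<times> 'a \<Rightarrow> 'a \<times> 'a \<Rightarrow> 'a \<times> 'a \<Rightarrow> 'a \<times> 'a \<Rightarrow> bool" where
  "is_trapezoid R x1 x2 x3 x4 \<longleftrightarrow>
     (\<exists>c\<in>carrier R. psub R x1 x2 =
        (c \<otimes>\<^bsub>R\<^esub> fst (psub R x3 x4), c \<otimes>\<^bsub>R\<^esub> snd (psub R x3 x4)))"

definition trap_count :: "('a, 'b) ring_scheme \<Rightarrow> ('a \<times> 'a) set \<Rightarrow> ('a \<times> 'a) set \<Rightarrow> nat" where
  "trap_count R A B = card {(x1, x2, x3, x4). x1 \<in> A \<and> x2 \<in> A \<and> x3 \<in> B \<and> x4 \<in> B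
                                             \<and> is_trapezoid R x1 x2 x3 x4}"

definition is_line :: "('a, 'b) ring_scheme \<Rightarrow> ('a \<times> 'a) set \<Rightarrow> bool" where
  "is_line R l \<longleftrightarrow>
     (\<exists>p v. p \<in> carrier R \<times> carrier R \<and> v \<in> carrier R \<times> carrier R
            \<and> v \<noteq> (\<zero>\<^bsub>R\<^esub>, \<zero>\<^bsub>R\<^esub>)
            \<and> l = {(fst p \<oplus>\<^bsub>R\<^esub> t \<otimes>\<^bsub>R\<^esub> fst v, snd p \<oplus>\<^bsub>R\<^esub> t \<otimes>\<^bsub>R\<^esub> snd v) | t. t \<in> carrier R})"

definition k_regular :: "('a, 'b) ring_scheme \<Rightarrow> real \<Rightarrow> real \<Rightarrow> ('a \<times> 'a) set \<Rightarrow> bool" where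
  "k_regular R C0 k A \<longleftrightarrow>
     k \<le> C0 * sqrt (real (card A)) \<and>
     (\<exists>L Apart. finite L \<and> (\<forall>l\<in>L. is_line R l)
        \<and> k / C0 \<le> real (card L) \<and> real (card L) \<le> C0 * k
        \<and> A = (\<Union>l\<in>L. Apart l) \<and> disjoint_family_on Apart L
        \<and> (\<forall>l\<in>L. Apart l \<subseteq> l
                 \<and> real (card A) / (C0 * k) \<le> real (card (Apart l))
                 \<and> real (card (Apart l)) \<le> C0 * real (card A) / k))"

definition irregular :: "('a, 'b) ring_scheme \<Rightarrow> ('a \<times> 'a) set \<Rightarrow> bool" where
  "irregular R A \<longleftrightarrow> (\<forall>l. is_line R l \<longrightarrow> real (card (l \<inter> A)) \<le> sqrt (real (card A)))"

end

theory Submission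
  imports Defs
begin


context field
begin

lemma inv_ex: "a \<in> carrier R \<Longrightarrow> a \<noteq> \<zero> \<Longrightarrow> \<exists>c\<in>carrier R. a \<otimes> c = \<one>"
  using field_Units Units_r_inv Units_inv_closed by (metis Diff_iff singletonD)

lemma mz: assumes "x \<in> carrier R" "y \<in> carrier R" shows "(x \<ominus> y = \<zero>) = (x = y)"
proof
  assume h: "x \<ominus> y = \<zero>"
  have "x = (x \<ominus> y) \<oplus> y" using assms by algebra
  then show "x = y" using h assms by simp
next
  assume "x = y" then show "x \<ominus> y = \<zero>" using assms by (simp add: a_minus_def r_neg)
qed

lemma iso:
  assumes ns: "\<not> (\<exists>x\<in>carrier R. x \<otimes> x = \<ominus> \<one>)"
    and ab: "a \<in> carrier R" "b \<in> carrier R" and e: "a \<otimes> a \<oplus> b \<otimes> b = \<zero>"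
  shows "a = \<zero> \<and> b = \<zero>"
proof (cases "b = \<zero>")
  case True
  then have "a \<otimes> a = \<zero>" using e ab by simp
  then show ?thesis using integral ab True by blast
next
  case False
  then obtain c where c: "c \<in> carrier R" "b \<otimes> c = \<one>" using inv_ex ab by blast
  have "a \<otimes> c \<otimes> (a \<otimes> c) = (a \<otimes> a \<oplus> b \<otimes> b) \<otimes> (c \<otimes> c) \<ominus> (b \<otimes> c) \<otimes> (b \<otimes> c)"
    using ab c(1) by algebra
  also have "\<dots> = \<ominus> \<one>" using e c ab by (simp add: a_minus_def)
  finally show ?thesis using ns ab c by blast
qed

end


definition parl :: "('a, 'b) ring_scheme \<Rightarrow> 'a \<times> 'a \<Rightarrow> 'a \<times> 'a \<Rightarrow> ('a \<times> 'a) set" where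
  "parl R p v = {(fst p \<oplus>\<^bsub>R\<^esub> t \<otimes>\<^bsub>R\<^esub> fst v, snd p \<oplus>\<^bsub>R\<^esub> t \<otimes>\<^bsub>R\<^esub> snd v) | t. t \<in> carrier R}"

context field
begin

lemma is_line_parl: "is_line R l \<longleftrightarrow> (\<exists>p v. p \<in> carrier R \<times> carrier R \<and> v \<in> carrier R \<times> carrier R
            \<and> v \<noteq> (\<zero>, \<zero>) \<and> l = parl R p v)"
  unfolding is_line_def parl_def by simp

lemma parl_sub: "p \<in> carrier R \<times> carrier R \<Longrightarrow> v \<in> carrier R \<times> carrier R \<Longrightarrow> parl R p v \<subseteq> carrier R \<times> carrier R"
  unfolding parl_def by auto

lemma line_sub: "is_line R l \<Longrightarrow> l \<subseteq> carrier R \<times> carrier R"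
  by (metis is_line_parl parl_sub)

lemma psub_eq0: "x \<in> carrier R \<times> carrier R \<Longrightarrow> y \<in> carrier R \<times> carrier R \<Longrightarrow> psub R x y = (\<zero>, \<zero>) \<longleftrightarrow> x = y"
  unfolding psub_def by (cases x; cases y) (simp add: mz)

lemma line_through:
  assumes l: "is_line R l" and xy: "x \<in> l" "y \<in> l" "x \<noteq> y"
  shows "l = parl R x (psub R y x)"
proof -
  obtain p v where pv: "p \<in> carrier R \<times> carrier R" "v \<in> carrier R \<times> carrier R" "v \<noteq> (\<zero>,\<zero>)" "l = parl R p v"
    using l is_line_parl by metis
  obtain p1 p2 v1 v2 where pp: "p = (p1,p2)" "v = (v1,v2)" by (cases p, cases v) auto
  have c: "p1 \<in> carrier R" "p2 \<in> carrier R" "v1 \<in> carrier R" "v2 \<in> carrier R" using pv pp by auto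
  obtain s where s: "s \<in> carrier R" "x = (p1 \<oplus> s \<otimes> v1, p2 \<oplus> s \<otimes> v2)" using xy(1) unfolding pv(4) pp parl_def by auto
  obtain r where r: "r \<in> carrier R" "y = (p1 \<oplus> r \<otimes> v1, p2 \<oplus> r \<otimes> v2)" using xy(2) unfolding pv(4) pp parl_def by auto
  have "r \<ominus> s \<noteq> \<zero>" using xy(3) s r mz by metis
  then obtain e where e: "e \<in> carrier R" "(r \<ominus> s) \<otimes> e = \<one>" using inv_ex s r by auto
  have psxy: "psub R y x = ((r \<ominus> s) \<otimes> v1, (r \<ominus> s) \<otimes> v2)"
  proof -
    have "(p1 \<oplus> r \<otimes> v1) \<ominus> (p1 \<oplus> s \<otimes> v1) = (r \<ominus> s) \<otimes> v1" using c s(1) r(1) by algebra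
    moreover have "(p2 \<oplus> r \<otimes> v2) \<ominus> (p2 \<oplus> s \<otimes> v2) = (r \<ominus> s) \<otimes> v2" using c s(1) r(1) by algebra
    ultimately show ?thesis unfolding psub_def using s r by simp
  qed
  show ?thesis
  proof
    show "l \<subseteq> parl R x (psub R y x)"
    proof
      fix z assume "z \<in> l"
      then obtain t where t: "t \<in> carrier R" "z = (p1 \<oplus> t \<otimes> v1, p2 \<oplus> t \<otimes> v2)" using pv pp unfolding parl_def by auto
      have h2: "\<And>w q. w \<in> carrier R \<Longrightarrow> q \<in> carrier R \<Longrightarrow> q \<oplus> s \<otimes> w \<oplus> (t \<ominus> s) \<otimes> w = q \<oplus> t \<otimes> w"
        using s(1) t(1) by algebra
      have h3: "\<And>w q. w \<in> carrier R \<Longrightarrow> q \<in> carrier R \<Longrightarrow> q \<oplus> s \<otimes> w \<oplus> ((t \<ominus> s) \<otimes> e) \<otimes> ((r \<ominus> s) \<otimes> w)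
             = q \<oplus> s \<otimes> w \<oplus> (t \<ominus> s) \<otimes> w \<otimes> ((r \<ominus> s) \<otimes> e)"
        using s(1) r(1) t(1) e(1) by algebra
      have "z = (fst x \<oplus> ((t \<ominus> s) \<otimes> e) \<otimes> fst (psub R y x), snd x \<oplus> ((t \<ominus> s) \<otimes> e) \<otimes> snd (psub R y x))"
      proof -
        have "p1 \<oplus> s \<otimes> v1 \<oplus> ((t \<ominus> s) \<otimes> e) \<otimes> ((r \<ominus> s) \<otimes> v1) = p1 \<oplus> t \<otimes> v1"
          using h3[of v1 p1] h2[of v1 p1] e c s(1) t(1) by simp
        moreover have "p2 \<oplus> s \<otimes> v2 \<oplus> ((t \<ominus> s) \<otimes> e) \<otimes> ((r \<ominus> s) \<otimes> v2) = p2 \<oplus> t \<otimes> v2"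
          using h3[of v2 p2] h2[of v2 p2] e c s(1) t(1) by simp
        ultimately show ?thesis using t s psxy by simp
      qed
      then show "z \<in> parl R x (psub R y x)" unfolding parl_def using t s e by auto
    qed
  next
    show "parl R x (psub R y x) \<subseteq> l"
    proof
      fix z assume "z \<in> parl R x (psub R y x)"
      then obtain u where u: "u \<in> carrier R" "z = (fst x \<oplus> u \<otimes> fst (psub R y x), snd x \<oplus> u \<otimes> snd (psub R y x))"
        unfolding parl_def by auto
      have h: "\<And>w q. w \<in> carrier R \<Longrightarrow> q \<in> carrier R \<Longrightarrow> q \<oplus> s \<otimes> w \<oplus> u \<otimes> ((r \<ominus> s) \<otimes> w) = q \<oplus> (s \<oplus> u \<otimes> (r \<ominus> s)) \<otimes> w"
        using s(1) r(1) u(1) by algebra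
      have "z = (p1 \<oplus> (s \<oplus> u \<otimes> (r \<ominus> s)) \<otimes> v1, p2 \<oplus> (s \<oplus> u \<otimes> (r \<ominus> s)) \<otimes> v2)"
        using u psxy s h[of v1 p1] h[of v2 p2] c by simp
      then show "z \<in> l" unfolding pv(4) pp parl_def using u s r by auto
    qed
  qed
qed

lemma two_lines:
  assumes "is_line R l" "is_line R l'" "x \<in> l" "y \<in> l" "x \<in> l'" "y \<in> l'" "x \<noteq> y"
  shows "l = l'"
proof -
  have "l = parl R x (psub R y x)" using line_through[of l x y] assms by simp
  moreover have "l' = parl R x (psub R y x)" using line_through[of l' x y] assms by simp
  ultimately show ?thesis by simp
qed

lemma card_two_lines:
  assumes "is_line R l" "is_line R l'" "l \<noteq> l'" "finite (carrier R)"
  shows "card (l \<inter> l') \<le> 1"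
proof -
  have "finite (l \<inter> l')" using line_sub[OF assms(1)] assms(4) finite_subset by (meson finite_SigmaI inf.coboundedI1)
  moreover have "\<forall>a\<in>l \<inter> l'. \<forall>b\<in>l \<inter> l'. a = b" using two_lines assms(1-3) by blast
  ultimately show ?thesis using card_le_Suc0_iff_eq by (metis One_nat_def)
qed

end


context field
begin

lemma parlI: "t \<in> carrier R \<Longrightarrow> z = (fst p \<oplus> t \<otimes> fst v, snd p \<oplus> t \<otimes> snd v) \<Longrightarrow> z \<in> parl R p v"
  unfolding parl_def by blast

lemma parl_line: "p \<in> carrier R \<times> carrier R \<Longrightarrow> v \<in> carrier R \<times> carrier R \<Longrightarrow> v \<noteq> (\<zero>, \<zero>) \<Longrightarrow> is_line R (parl R p v)"
  unfolding is_line_parl by (rule exI[of _ p], rule exI[of _ v]) simp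

lemma perp_line:
  assumes x: "x \<in> carrier R \<times> carrier R" and u: "u \<in> carrier R \<times> carrier R" "u \<noteq> (\<zero>, \<zero>)"
  shows "is_line R {y \<in> carrier R \<times> carrier R. pdot R u (psub R y x) = \<zero>}"
proof -
  obtain x1 x2 u1 u2 where xx: "x = (x1,x2)" "u = (u1,u2)" by (cases x, cases u) auto
  have c: "x1 \<in> carrier R" "x2 \<in> carrier R" "u1 \<in> carrier R" "u2 \<in> carrier R" using x u xx by auto
  have eq: "{y \<in> carrier R \<times> carrier R. pdot R u (psub R y x) = \<zero>} = parl R x (\<ominus> u2, u1)"
  proof
    show "parl R x (\<ominus> u2, u1) \<subseteq> {y \<in> carrier R \<times> carrier R. pdot R u (psub R y x) = \<zero>}"
    proof
      fix y assume "y \<in> parl R x (\<ominus> u2, u1)"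
      then obtain t where t: "t \<in> carrier R" "y = (x1 \<oplus> t \<otimes> (\<ominus> u2), x2 \<oplus> t \<otimes> u1)" unfolding parl_def xx by auto
      have "u1 \<otimes> ((x1 \<oplus> t \<otimes> (\<ominus> u2)) \<ominus> x1) \<oplus> u2 \<otimes> ((x2 \<oplus> t \<otimes> u1) \<ominus> x2) = \<zero>"
        using c t(1) by algebra
      then show "y \<in> {y \<in> carrier R \<times> carrier R. pdot R u (psub R y x) = \<zero>}"
        using t c unfolding pdot_def psub_def xx by simp
    qed
  next
    show "{y \<in> carrier R \<times> carrier R. pdot R u (psub R y x) = \<zero>} \<subseteq> parl R x (\<ominus> u2, u1)"
    proof
      fix y assume "y \<in> {y \<in> carrier R \<times> carrier R. pdot R u (psub R y x) = \<zero>}"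
      then obtain y1 y2 where y: "y = (y1,y2)" "y1 \<in> carrier R" "y2 \<in> carrier R"
           and E: "u1 \<otimes> (y1 \<ominus> x1) \<oplus> u2 \<otimes> (y2 \<ominus> x2) = \<zero>"
        unfolding pdot_def psub_def xx by auto
      show "y \<in> parl R x (\<ominus> u2, u1)"
      proof (cases "u1 = \<zero>")
        case False
        then obtain e where e: "e \<in> carrier R" "u1 \<otimes> e = \<one>" using inv_ex c by auto
        define t where "t = (y2 \<ominus> x2) \<otimes> e"
        have i1: "y1 \<ominus> (x1 \<oplus> t \<otimes> (\<ominus> u2)) = e \<otimes> (u1 \<otimes> (y1 \<ominus> x1) \<oplus> u2 \<otimes> (y2 \<ominus> x2)) \<oplus> (\<one> \<ominus> u1 \<otimes> e) \<otimes> (y1 \<ominus> x1)"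
          unfolding t_def using c y(2,3) e(1) by algebra
        have i2: "y2 \<ominus> (x2 \<oplus> t \<otimes> u1) = (\<one> \<ominus> u1 \<otimes> e) \<otimes> (y2 \<ominus> x2)"
          unfolding t_def using c y(2,3) e(1) by algebra
        have "y1 \<ominus> (x1 \<oplus> t \<otimes> (\<ominus> u2)) = \<zero>" using i1 E e c y by (simp add: a_minus_def r_neg)
        then have 1: "y1 = x1 \<oplus> t \<otimes> (\<ominus> u2)" using mz c y t_def e by simp
        have "y2 \<ominus> (x2 \<oplus> t \<otimes> u1) = \<zero>" using i2 E e c y by (simp add: a_minus_def r_neg)
        then have 2: "y2 = x2 \<oplus> t \<otimes> u1" using mz c y t_def e by simp
        have "t \<in> carrier R" using t_def c y e by simp
        then show ?thesis unfolding xx y by (rule parlI) (simp add: 1 2)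
      next
        case True
        then have "u2 \<noteq> \<zero>" using u xx by auto
        then obtain e where e: "e \<in> carrier R" "u2 \<otimes> e = \<one>" using inv_ex c by auto
        define t where "t = \<ominus> ((y1 \<ominus> x1) \<otimes> e)"
        have i1: "y1 \<ominus> (x1 \<oplus> t \<otimes> (\<ominus> u2)) = (\<one> \<ominus> u2 \<otimes> e) \<otimes> (y1 \<ominus> x1)"
          unfolding t_def using c y(2,3) e(1) by algebra
        have i2: "y2 \<ominus> (x2 \<oplus> t \<otimes> u1) = e \<otimes> (u1 \<otimes> (y1 \<ominus> x1) \<oplus> u2 \<otimes> (y2 \<ominus> x2)) \<oplus> (\<one> \<ominus> u2 \<otimes> e) \<otimes> (y2 \<ominus> x2) \<ominus> u1 \<otimes> (t \<oplus> e \<otimes> (y1 \<ominus> x1))"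
          unfolding t_def using c y(2,3) e(1) by algebra
        have "y1 \<ominus> (x1 \<oplus> t \<otimes> (\<ominus> u2)) = \<zero>" using i1 E e c y by (simp add: a_minus_def r_neg)
        then have 1: "y1 = x1 \<oplus> t \<otimes> (\<ominus> u2)" using mz c y t_def e by simp
        have "y2 \<ominus> (x2 \<oplus> t \<otimes> u1) = \<zero>" using i2 E e c y True t_def by (simp add: a_minus_def r_neg)
        then have 2: "y2 = x2 \<oplus> t \<otimes> u1" using mz c y t_def e by simp
        have "t \<in> carrier R" using t_def c y e by simp
        then show ?thesis unfolding xx y by (rule parlI) (simp add: 1 2)
      qed
    qed
  qed
  have "(\<ominus> u2, u1) \<noteq> (\<zero>, \<zero>)"
  proof
    assume "(\<ominus> u2, u1) = (\<zero>, \<zero>)"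
    then have "\<ominus> u2 = \<zero>" "u1 = \<zero>" by auto
    then have "u2 = \<zero>" using c minus_minus minus_zero by metis
    then show False using u xx \<open>u1 = \<zero>\<close> by simp
  qed
  then show ?thesis unfolding eq using x c by (intro parl_line) auto
qed

end


context field
begin

lemma K1: "u \<in> carrier R \<Longrightarrow> v \<in> carrier R \<Longrightarrow> w \<in> carrier R \<Longrightarrow>
  (u \<oplus> w) \<otimes> (u \<oplus> w) = \<ominus> (u \<otimes> v \<oplus> v \<otimes> w \<oplus> w \<otimes> (\<ominus> (u \<oplus> v \<oplus> w)) \<oplus> (\<ominus> (u \<oplus> v \<oplus> w)) \<otimes> u)"
  by algebra

lemma K2: "a0 \<in> carrier R \<Longrightarrow> a1 \<in> carrier R \<Longrightarrow> a2 \<in> carrier R \<Longrightarrow> a3 \<in> carrier R \<Longrightarrow>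
  a0 \<ominus> a3 = \<ominus> ((a1 \<ominus> a0) \<oplus> (a2 \<ominus> a1) \<oplus> (a3 \<ominus> a2))"
  by algebra

lemma K3: "a \<in> carrier R \<Longrightarrow> b \<in> carrier R \<Longrightarrow> c \<in> carrier R \<Longrightarrow> d \<in> carrier R \<Longrightarrow>
   a' \<in> carrier R \<Longrightarrow> b' \<in> carrier R \<Longrightarrow> c' \<in> carrier R \<Longrightarrow> d' \<in> carrier R \<Longrightarrow>
   (a \<oplus> a') \<oplus> (b \<oplus> b') \<oplus> (c \<oplus> c') \<oplus> (d \<oplus> d') = (a \<oplus> b \<oplus> c \<oplus> d) \<oplus> (a' \<oplus> b' \<oplus> c' \<oplus> d')"
  by algebra

lemma K4: "a \<in> carrier R \<Longrightarrow> b \<in> carrier R \<Longrightarrow> \<ominus> a \<oplus> \<ominus> b = \<ominus> (a \<oplus> b)"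
  by algebra

lemma K5: "a3 \<in> carrier R \<Longrightarrow> a0 \<in> carrier R \<Longrightarrow> a1 \<in> carrier R \<Longrightarrow> a2 \<in> carrier R \<Longrightarrow>
   a3 \<ominus> (a0 \<ominus> a1 \<oplus> a2) = (a1 \<ominus> a0) \<oplus> (a3 \<ominus> a2)"
  by algebra

lemma rect_x3:
  assumes ns: "\<not> (\<exists>x\<in>carrier R. x \<otimes> x = \<ominus> \<one>)"
    and c: "x0 \<in> carrier R \<times> carrier R" "x1 \<in> carrier R \<times> carrier R" "x2 \<in> carrier R \<times> carrier R" "x3 \<in> carrier R \<times> carrier R"
    and r: "is_rectangle R x0 x1 x2 x3"
  shows "x3 = (fst x0 \<ominus> fst x1 \<oplus> fst x2, snd x0 \<ominus> snd x1 \<oplus> snd x2)"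
proof -
  obtain a0 b0 where x0: "x0 = (a0,b0)" by (cases x0)
  obtain a1 b1 where x1: "x1 = (a1,b1)" by (cases x1)
  obtain a2 b2 where x2: "x2 = (a2,b2)" by (cases x2)
  obtain a3 b3 where x3: "x3 = (a3,b3)" by (cases x3)
  have cc: "a0 \<in> carrier R" "b0 \<in> carrier R" "a1 \<in> carrier R" "b1 \<in> carrier R"
           "a2 \<in> carrier R" "b2 \<in> carrier R" "a3 \<in> carrier R" "b3 \<in> carrier R" using c x0 x1 x2 x3 by auto
  define u1 where "u1 = a1 \<ominus> a0"
  define v1 where "v1 = a2 \<ominus> a1"
  define w1 where "w1 = a3 \<ominus> a2"
  define u2 where "u2 = b1 \<ominus> b0"
  define v2 where "v2 = b2 \<ominus> b1"
  define w2 where "w2 = b3 \<ominus> b2"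
  have uc: "u1 \<in> carrier R" "v1 \<in> carrier R" "w1 \<in> carrier R" "u2 \<in> carrier R" "v2 \<in> carrier R" "w2 \<in> carrier R"
    unfolding u1_def v1_def w1_def u2_def v2_def w2_def using cc by auto
  have z1: "a0 \<ominus> a3 = \<ominus> (u1 \<oplus> v1 \<oplus> w1)" unfolding u1_def v1_def w1_def using K2[of a0 a1 a2 a3] cc by simp
  have z2: "b0 \<ominus> b3 = \<ominus> (u2 \<oplus> v2 \<oplus> w2)" unfolding u2_def v2_def w2_def using K2[of b0 b1 b2 b3] cc by simp
  have e: "u1 \<otimes> v1 \<oplus> u2 \<otimes> v2 = \<zero>" "v1 \<otimes> w1 \<oplus> v2 \<otimes> w2 = \<zero>"
     "w1 \<otimes> (\<ominus> (u1 \<oplus> v1 \<oplus> w1)) \<oplus> w2 \<otimes> (\<ominus> (u2 \<oplus> v2 \<oplus> w2)) = \<zero>"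
     "(\<ominus> (u1 \<oplus> v1 \<oplus> w1)) \<otimes> u1 \<oplus> (\<ominus> (u2 \<oplus> v2 \<oplus> w2)) \<otimes> u2 = \<zero>"
  proof -
    have r4: "is_corner R x0 x1 x2" "is_corner R x1 x2 x3" "is_corner R x2 x3 x0" "is_corner R x3 x0 x1"
      using r unfolding is_rectangle_def by auto
    show "u1 \<otimes> v1 \<oplus> u2 \<otimes> v2 = \<zero>" using r4(1) unfolding is_corner_def pdot_def psub_def x0 x1 x2 x3 fst_conv snd_conv
      u1_def[symmetric] v1_def[symmetric] u2_def[symmetric] v2_def[symmetric] .
    show "v1 \<otimes> w1 \<oplus> v2 \<otimes> w2 = \<zero>" using r4(2) unfolding is_corner_def pdot_def psub_def x0 x1 x2 x3 fst_conv snd_conv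
      w1_def[symmetric] v1_def[symmetric] w2_def[symmetric] v2_def[symmetric] .
    show "w1 \<otimes> (\<ominus> (u1 \<oplus> v1 \<oplus> w1)) \<oplus> w2 \<otimes> (\<ominus> (u2 \<oplus> v2 \<oplus> w2)) = \<zero>"
      using r4(3) unfolding is_corner_def pdot_def psub_def x0 x1 x2 x3 fst_conv snd_conv
      w1_def[symmetric] z1 w2_def[symmetric] z2 .
    show "(\<ominus> (u1 \<oplus> v1 \<oplus> w1)) \<otimes> u1 \<oplus> (\<ominus> (u2 \<oplus> v2 \<oplus> w2)) \<otimes> u2 = \<zero>"
      using r4(4) unfolding is_corner_def pdot_def psub_def x0 x1 x2 x3 fst_conv snd_conv
      u1_def[symmetric] z1 u2_def[symmetric] z2 .
  qed
  have "(u1 \<oplus> w1) \<otimes> (u1 \<oplus> w1) \<oplus> (u2 \<oplus> w2) \<otimes> (u2 \<oplus> w2)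
      = \<ominus> ((u1 \<otimes> v1 \<oplus> u2 \<otimes> v2) \<oplus> (v1 \<otimes> w1 \<oplus> v2 \<otimes> w2) \<oplus>
          (w1 \<otimes> (\<ominus> (u1 \<oplus> v1 \<oplus> w1)) \<oplus> w2 \<otimes> (\<ominus> (u2 \<oplus> v2 \<oplus> w2))) \<oplus>
          ((\<ominus> (u1 \<oplus> v1 \<oplus> w1)) \<otimes> u1 \<oplus> (\<ominus> (u2 \<oplus> v2 \<oplus> w2)) \<otimes> u2))"
  proof -
    let ?S1 = "u1 \<otimes> v1 \<oplus> v1 \<otimes> w1 \<oplus> w1 \<otimes> (\<ominus> (u1 \<oplus> v1 \<oplus> w1)) \<oplus> (\<ominus> (u1 \<oplus> v1 \<oplus> w1)) \<otimes> u1"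
    let ?S2 = "u2 \<otimes> v2 \<oplus> v2 \<otimes> w2 \<oplus> w2 \<otimes> (\<ominus> (u2 \<oplus> v2 \<oplus> w2)) \<oplus> (\<ominus> (u2 \<oplus> v2 \<oplus> w2)) \<otimes> u2"
    have "(u1 \<oplus> w1) \<otimes> (u1 \<oplus> w1) \<oplus> (u2 \<oplus> w2) \<otimes> (u2 \<oplus> w2) = \<ominus> ?S1 \<oplus> \<ominus> ?S2"
      using K1[of u1 v1 w1] K1[of u2 v2 w2] uc by simp
    also have "\<dots> = \<ominus> (?S1 \<oplus> ?S2)" by (rule K4) (use uc in auto)
    also have "?S1 \<oplus> ?S2 = (u1 \<otimes> v1 \<oplus> u2 \<otimes> v2) \<oplus> (v1 \<otimes> w1 \<oplus> v2 \<otimes> w2) \<oplus>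
          (w1 \<otimes> (\<ominus> (u1 \<oplus> v1 \<oplus> w1)) \<oplus> w2 \<otimes> (\<ominus> (u2 \<oplus> v2 \<oplus> w2))) \<oplus>
          ((\<ominus> (u1 \<oplus> v1 \<oplus> w1)) \<otimes> u1 \<oplus> (\<ominus> (u2 \<oplus> v2 \<oplus> w2)) \<otimes> u2)"
      by (rule K3[symmetric]) (use uc in auto)
    finally show ?thesis .
  qed
  then have "(u1 \<oplus> w1) \<otimes> (u1 \<oplus> w1) \<oplus> (u2 \<oplus> w2) \<otimes> (u2 \<oplus> w2) = \<zero>" using e by simp
  then have pq: "u1 \<oplus> w1 = \<zero>" "u2 \<oplus> w2 = \<zero>" using iso[OF ns, of "u1 \<oplus> w1" "u2 \<oplus> w2"] uc by simp_all
  have "a3 \<ominus> (a0 \<ominus> a1 \<oplus> a2) = u1 \<oplus> w1" unfolding u1_def w1_def by (rule K5) (use cc in auto)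
  then have "a3 \<ominus> (a0 \<ominus> a1 \<oplus> a2) = \<zero>" using pq by simp
  then have "a3 = a0 \<ominus> a1 \<oplus> a2" using mz[of a3 "a0 \<ominus> a1 \<oplus> a2"] cc by simp
  moreover have "b3 \<ominus> (b0 \<ominus> b1 \<oplus> b2) = u2 \<oplus> w2" unfolding u2_def w2_def by (rule K5) (use cc in auto)
  then have "b3 \<ominus> (b0 \<ominus> b1 \<oplus> b2) = \<zero>" using pq by simp
  then have "b3 = b0 \<ominus> b1 \<oplus> b2" using mz[of b3 "b0 \<ominus> b1 \<oplus> b2"] cc by simp
  ultimately show ?thesis using x0 x1 x2 x3 by simp
qed

end


context field
begin

lemma minus_self: "x \<in> carrier R \<Longrightarrow> x \<ominus> x = \<zero>" using mz by simp

lemma K6: "u \<in> carrier R \<Longrightarrow> d \<in> carrier R \<Longrightarrow> d \<otimes> d = \<ominus> (u \<otimes> d \<oplus> (u \<oplus> d) \<otimes> (\<ominus> d))"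
  by algebra
lemma K7: "a \<in> carrier R \<Longrightarrow> b \<in> carrier R \<Longrightarrow> a' \<in> carrier R \<Longrightarrow> b' \<in> carrier R \<Longrightarrow>
   (a \<oplus> b) \<oplus> (a' \<oplus> b') = (a \<oplus> a') \<oplus> (b \<oplus> b')"
  by algebra
lemma K8: "a0 \<in> carrier R \<Longrightarrow> a1 \<in> carrier R \<Longrightarrow> a2 \<in> carrier R \<Longrightarrow> a2 \<ominus> a0 = (a1 \<ominus> a0) \<oplus> (a2 \<ominus> a1)"
  by algebra
lemma K9: "a1 \<in> carrier R \<Longrightarrow> a2 \<in> carrier R \<Longrightarrow> a1 \<ominus> a2 = \<ominus> (a2 \<ominus> a1)"
  by algebra
lemma K10: "a1 \<in> carrier R \<Longrightarrow> a2 \<in> carrier R \<Longrightarrow> c \<in> carrier R \<Longrightarrow> d \<in> carrier R \<Longrightarrow>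
   a2 \<ominus> (a1 \<oplus> (\<ominus> c) \<otimes> d) = (c \<otimes> d) \<ominus> (a1 \<ominus> a2)"
  by algebra
lemma K11: "x3 \<in> carrier R \<Longrightarrow> x4 \<in> carrier R \<Longrightarrow> c \<in> carrier R \<Longrightarrow> e \<in> carrier R \<Longrightarrow>
   x4 \<ominus> (x3 \<oplus> (\<ominus> e) \<otimes> (c \<otimes> (x3 \<ominus> x4))) = (c \<otimes> e \<ominus> \<one>) \<otimes> (x3 \<ominus> x4)"
  by algebra

lemma perp_unique:
  assumes ns: "\<not> (\<exists>x\<in>carrier R. x \<otimes> x = \<ominus> \<one>)"
    and c: "x0 \<in> carrier R \<times> carrier R" "x1 \<in> carrier R \<times> carrier R" "y \<in> carrier R \<times> carrier R"
    and h1: "pdot R (psub R x1 x0) (psub R y x1) = \<zero>"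
    and h2: "pdot R (psub R y x0) (psub R x1 y) = \<zero>"
  shows "x1 = y"
proof -
  obtain a0 b0 where x0: "x0 = (a0,b0)" by (cases x0)
  obtain a1 b1 where x1: "x1 = (a1,b1)" by (cases x1)
  obtain a2 b2 where x2: "y = (a2,b2)" by (cases y)
  have cc: "a0 \<in> carrier R" "b0 \<in> carrier R" "a1 \<in> carrier R" "b1 \<in> carrier R"
           "a2 \<in> carrier R" "b2 \<in> carrier R" using c x0 x1 x2 by auto
  define u1 where "u1 = a1 \<ominus> a0"
  define d1 where "d1 = a2 \<ominus> a1"
  define u2 where "u2 = b1 \<ominus> b0"
  define d2 where "d2 = b2 \<ominus> b1"
  have uc: "u1 \<in> carrier R" "d1 \<in> carrier R" "u2 \<in> carrier R" "d2 \<in> carrier R"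
    unfolding u1_def d1_def u2_def d2_def using cc by auto
  have z1: "a2 \<ominus> a0 = u1 \<oplus> d1" unfolding u1_def d1_def by (rule K8) (use cc in auto)
  have z2: "b2 \<ominus> b0 = u2 \<oplus> d2" unfolding u2_def d2_def by (rule K8) (use cc in auto)
  have y1: "a1 \<ominus> a2 = \<ominus> d1" unfolding d1_def by (rule K9) (use cc in auto)
  have y2: "b1 \<ominus> b2 = \<ominus> d2" unfolding d2_def by (rule K9) (use cc in auto)
  have e1: "u1 \<otimes> d1 \<oplus> u2 \<otimes> d2 = \<zero>"
    using h1 unfolding pdot_def psub_def x0 x1 x2 fst_conv snd_conv
      u1_def[symmetric] d1_def[symmetric] u2_def[symmetric] d2_def[symmetric] .
  have e2: "(u1 \<oplus> d1) \<otimes> (\<ominus> d1) \<oplus> (u2 \<oplus> d2) \<otimes> (\<ominus> d2) = \<zero>"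
    using h2 unfolding pdot_def psub_def x0 x1 x2 fst_conv snd_conv z1 z2 y1 y2 .
  have "d1 \<otimes> d1 \<oplus> d2 \<otimes> d2 = \<ominus> (u1 \<otimes> d1 \<oplus> (u1 \<oplus> d1) \<otimes> (\<ominus> d1)) \<oplus> \<ominus> (u2 \<otimes> d2 \<oplus> (u2 \<oplus> d2) \<otimes> (\<ominus> d2))"
    using K6[of u1 d1] K6[of u2 d2] uc by simp
  also have "\<dots> = \<ominus> ((u1 \<otimes> d1 \<oplus> (u1 \<oplus> d1) \<otimes> (\<ominus> d1)) \<oplus> (u2 \<otimes> d2 \<oplus> (u2 \<oplus> d2) \<otimes> (\<ominus> d2)))"
    by (rule K4) (use uc in auto)
  also have "(u1 \<otimes> d1 \<oplus> (u1 \<oplus> d1) \<otimes> (\<ominus> d1)) \<oplus> (u2 \<otimes> d2 \<oplus> (u2 \<oplus> d2) \<otimes> (\<ominus> d2))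
     = (u1 \<otimes> d1 \<oplus> u2 \<otimes> d2) \<oplus> ((u1 \<oplus> d1) \<otimes> (\<ominus> d1) \<oplus> (u2 \<oplus> d2) \<otimes> (\<ominus> d2))"
    by (rule K7) (use uc in auto)
  finally have "d1 \<otimes> d1 \<oplus> d2 \<otimes> d2 = \<zero>" using e1 e2 by simp
  then have "d1 = \<zero>" "d2 = \<zero>" using iso[OF ns, of d1 d2] uc by simp_all
  then have "a2 = a1" "b2 = b1" unfolding d1_def d2_def using mz cc by simp_all
  then show ?thesis using x1 x2 by simp
qed

lemma trap_ne:
  assumes c: "x1 \<in> carrier R \<times> carrier R" "x2 \<in> carrier R \<times> carrier R" "x3 \<in> carrier R \<times> carrier R" "x4 \<in> carrier R \<times> carrier R"
    and t: "is_trapezoid R x1 x2 x3 x4" and ne: "x1 \<noteq> x2"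
  shows "x3 \<noteq> x4" "x2 \<in> parl R x1 (psub R x3 x4)" "x4 \<in> parl R x3 (psub R x1 x2)"
proof -
  obtain k where k: "k \<in> carrier R" "psub R x1 x2 = (k \<otimes> fst (psub R x3 x4), k \<otimes> snd (psub R x3 x4))"
    using t unfolding is_trapezoid_def by blast
  obtain a1 b1 where x1: "x1 = (a1,b1)" by (cases x1)
  obtain a2 b2 where x2: "x2 = (a2,b2)" by (cases x2)
  obtain a3 b3 where x3: "x3 = (a3,b3)" by (cases x3)
  obtain a4 b4 where x4: "x4 = (a4,b4)" by (cases x4)
  have cc: "a1 \<in> carrier R" "b1 \<in> carrier R" "a2 \<in> carrier R" "b2 \<in> carrier R"
           "a3 \<in> carrier R" "b3 \<in> carrier R" "a4 \<in> carrier R" "b4 \<in> carrier R" using c x1 x2 x3 x4 by auto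
  have kk: "a1 \<ominus> a2 = k \<otimes> (a3 \<ominus> a4)" "b1 \<ominus> b2 = k \<otimes> (b3 \<ominus> b4)"
    using k(2) unfolding psub_def x1 x2 x3 x4 by simp_all
  show n34: "x3 \<noteq> x4"
  proof
    assume "x3 = x4"
    then have "a3 \<ominus> a4 = \<zero>" "b3 \<ominus> b4 = \<zero>" using mz cc x3 x4 by simp_all
    then have "a1 \<ominus> a2 = \<zero>" "b1 \<ominus> b2 = \<zero>" using kk k(1) by simp_all
    then have "a1 = a2" "b1 = b2" using mz cc by simp_all
    then show False using ne x1 x2 by simp
  qed
  have "a2 \<ominus> (a1 \<oplus> (\<ominus> k) \<otimes> (a3 \<ominus> a4)) = \<zero>" using K10[of a1 a2 k "a3 \<ominus> a4"] kk cc k(1) mz by simp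
  then have p1: "a2 = a1 \<oplus> (\<ominus> k) \<otimes> (a3 \<ominus> a4)" using mz[of a2 "a1 \<oplus> (\<ominus> k) \<otimes> (a3 \<ominus> a4)"] cc k(1) by simp
  have "b2 \<ominus> (b1 \<oplus> (\<ominus> k) \<otimes> (b3 \<ominus> b4)) = \<zero>" using K10[of b1 b2 k "b3 \<ominus> b4"] kk cc k(1) mz by simp
  then have p2: "b2 = b1 \<oplus> (\<ominus> k) \<otimes> (b3 \<ominus> b4)" using mz[of b2 "b1 \<oplus> (\<ominus> k) \<otimes> (b3 \<ominus> b4)"] cc k(1) by simp
  show "x2 \<in> parl R x1 (psub R x3 x4)"
    by (rule parlI[of "\<ominus> k"]) (use k(1) p1 p2 x1 x2 x3 x4 in \<open>simp_all add: psub_def\<close>)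
  have "k \<noteq> \<zero>"
  proof
    assume "k = \<zero>"
    then have "a1 \<ominus> a2 = \<zero>" "b1 \<ominus> b2 = \<zero>" using kk cc by simp_all
    then have "a1 = a2" "b1 = b2" using mz cc by simp_all
    then show False using ne x1 x2 by simp
  qed
  then obtain e where e: "e \<in> carrier R" "k \<otimes> e = \<one>" using inv_ex k(1) by blast
  have "a4 \<ominus> (a3 \<oplus> (\<ominus> e) \<otimes> (k \<otimes> (a3 \<ominus> a4))) = \<zero>" using K11[of a3 a4 k e] e cc k(1) minus_self by simp
  then have q1: "a4 = a3 \<oplus> (\<ominus> e) \<otimes> (a1 \<ominus> a2)" using mz[of a4 "a3 \<oplus> (\<ominus> e) \<otimes> (k \<otimes> (a3 \<ominus> a4))"] cc k(1) e(1) kk by simp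
  have "b4 \<ominus> (b3 \<oplus> (\<ominus> e) \<otimes> (k \<otimes> (b3 \<ominus> b4))) = \<zero>" using K11[of b3 b4 k e] e cc k(1) minus_self by simp
  then have q2: "b4 = b3 \<oplus> (\<ominus> e) \<otimes> (b1 \<ominus> b2)" using mz[of b4 "b3 \<oplus> (\<ominus> e) \<otimes> (k \<otimes> (b3 \<ominus> b4))"] cc k(1) e(1) kk by simp
  show "x4 \<in> parl R x3 (psub R x1 x2)"
    by (rule parlI[of "\<ominus> e"]) (use e(1) q1 q2 x1 x2 x3 x4 in \<open>simp_all add: psub_def\<close>)
qed

end


lemma card_UN_bound:
  assumes "finite X" "\<And>x. x \<in> X \<Longrightarrow> finite (F x)" "\<And>x. x \<in> X \<Longrightarrow> real (card (F x)) \<le> K"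
    and "S \<subseteq> (\<Union>x\<in>X. F x)"
  shows "real (card S) \<le> real (card X) * K"
proof -
  have fin: "finite (\<Union>x\<in>X. F x)" using assms by auto
  have "card S \<le> card (\<Union>x\<in>X. F x)" using card_mono[OF fin assms(4)] .
  also have "\<dots> \<le> (\<Sum>x\<in>X. card (F x))" using card_UN_le[OF assms(1)] .
  finally have "real (card S) \<le> (\<Sum>x\<in>X. real (card (F x)))" by (metis of_nat_le_iff of_nat_sum)
  also have "\<dots> \<le> (\<Sum>x\<in>X. K)" using assms(3) by (intro sum_mono) auto
  finally show ?thesis by simp
qed

context field
begin

lemma line_meet_count:
  assumes fin: "finite (carrier R)" and L: "finite L" "\<forall>l\<in>L. is_line R l"
    and A: "A = (\<Union>l\<in>L. Ap l)" "\<forall>l\<in>L. Ap l \<subseteq> l" and m: "is_line R m"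
  shows "card (m \<inter> A) \<le> card L + (if m \<in> L then card (Ap m) else 0)"
proof -
  have fl: "\<And>l. l \<in> L \<Longrightarrow> finite (Ap l)"
    using A(2) L(2) line_sub fin by (meson finite_SigmaI finite_subset)
  have "m \<inter> A = (\<Union>l\<in>L. m \<inter> Ap l)" using A(1) by auto
  then have "card (m \<inter> A) \<le> (\<Sum>l\<in>L. card (m \<inter> Ap l))" using card_UN_le[OF L(1), of "\<lambda>l. m \<inter> Ap l"] by simp
  also have "\<dots> \<le> (\<Sum>l\<in>L. 1 + (if l = m then card (Ap l) else 0))"
  proof (rule sum_mono)
    fix l assume l: "l \<in> L"
    show "card (m \<inter> Ap l) \<le> 1 + (if l = m then card (Ap l) else 0)"
    proof (cases "l = m")
      case True
      have "card (m \<inter> Ap l) \<le> card (Ap l)" using card_mono[OF fl[OF l]] by auto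
      then show ?thesis using True by simp
    next
      case False
      have "card (m \<inter> Ap l) \<le> card (m \<inter> l)"
        by (rule card_mono) (use line_sub[OF m] fin A(2) l in \<open>auto intro: finite_subset\<close>)
      also have "\<dots> \<le> 1" using card_two_lines[OF m] L(2) l False fin by auto
      finally show ?thesis using False by simp
    qed
  qed
  also have "\<dots> = card L + (if m \<in> L then card (Ap m) else 0)"
    unfolding sum.distrib using L(1) by (simp add: sum.delta')
  finally show ?thesis .
qed

end


context field
begin

definition perpl :: "'a \<times> 'a \<Rightarrow> 'a \<times> 'a \<Rightarrow> ('a \<times> 'a) set" where
  "perpl x1 x0 = {y \<in> carrier R \<times> carrier R. pdot R (psub R x1 x0) (psub R y x1) = \<zero>}"

lemma psub_closed: "x \<in> carrier R \<times> carrier R \<Longrightarrow> y \<in> carrier R \<times> carrier R \<Longrightarrow> psub R x y \<in> carrier R \<times> carrier R"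
  unfolding psub_def by auto

lemma perpl_line: "x1 \<in> carrier R \<times> carrier R \<Longrightarrow> x0 \<in> carrier R \<times> carrier R \<Longrightarrow> x1 \<noteq> x0 \<Longrightarrow> is_line R (perpl x1 x0)"
  unfolding perpl_def by (rule perp_line) (auto simp: psub_closed psub_eq0)

lemma pdot_self0: "x \<in> carrier R \<times> carrier R \<Longrightarrow> y \<in> carrier R \<times> carrier R \<Longrightarrow> pdot R y (psub R x x) = \<zero>"
  unfolding pdot_def psub_def by (cases x, cases y) (simp add: minus_self)

lemma rect_bound:
  assumes fin: "finite (carrier R)" and ns: "\<not> (\<exists>x\<in>carrier R. x \<otimes> x = \<ominus> \<one>)"
    and L: "finite L" "\<forall>l\<in>L. is_line R l"
    and A: "A = (\<Union>l\<in>L. Ap l)" "\<forall>l\<in>L. Ap l \<subseteq> l" and M: "\<forall>l\<in>L. real (card (Ap l)) \<le> Mx"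
  shows "real (rect_count R A) \<le> real (card A)^2 + real (card A)^2 * real (card L)
           + real (card L) * real (card A) * (real (card L) + Mx)"
proof -
  have AF: "A \<subseteq> carrier R \<times> carrier R" using A L(2) line_sub by blast
  have finA: "finite A" using AF fin by (meson finite_SigmaI finite_subset)
  let ?F2 = "carrier R \<times> carrier R"
  define CS where "CS = {(x0, x1, x2). x0 \<in> A \<and> x1 \<in> A \<and> x2 \<in> A \<and> is_corner R x0 x1 x2}"
  define g where "g = (\<lambda>(x0::'a\<times>'a, x1::'a\<times>'a, x2::'a\<times>'a). (x0, x1, x2, (fst x0 \<ominus> fst x1 \<oplus> fst x2, snd x0 \<ominus> snd x1 \<oplus> snd x2)))"
  have finCS: "finite CS"
    by (rule finite_subset[of _ "A \<times> A \<times> A"]) (auto simp: CS_def finA)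
  have step1: "real (rect_count R A) \<le> real (card CS) * 1"
    unfolding rect_count_def
  proof (rule card_UN_bound[where F = "\<lambda>t. {g t}"])
    show "{(x0, x1, x2, x3). x0 \<in> A \<and> x1 \<in> A \<and> x2 \<in> A \<and> x3 \<in> A \<and> is_rectangle R x0 x1 x2 x3} \<subseteq> (\<Union>t\<in>CS. {g t})"
    proof
      fix z assume "z \<in> {(x0, x1, x2, x3). x0 \<in> A \<and> x1 \<in> A \<and> x2 \<in> A \<and> x3 \<in> A \<and> is_rectangle R x0 x1 x2 x3}"
      then obtain x0 x1 x2 x3 where z: "z = (x0,x1,x2,x3)" "x0 \<in> A" "x1 \<in> A" "x2 \<in> A" "x3 \<in> A" "is_rectangle R x0 x1 x2 x3"
        by auto
      have x3: "x3 = (fst x0 \<ominus> fst x1 \<oplus> fst x2, snd x0 \<ominus> snd x1 \<oplus> snd x2)"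
        by (rule rect_x3[OF ns _ _ _ _ z(6)]) (use z AF in auto)
      have cs: "(x0,x1,x2) \<in> CS" using z unfolding CS_def is_rectangle_def by auto
      have "z = g (x0,x1,x2)" using z(1) x3 by (simp add: g_def)
      then show "z \<in> (\<Union>t\<in>CS. {g t})" using cs by (intro UN_I[of "(x0,x1,x2)"]) simp_all
    qed
  qed (use finCS in auto)
  define C1 where "C1 = {t \<in> CS. fst t = fst (snd t)}"
  define C2 where "C2 = {t \<in> CS. fst t \<noteq> fst (snd t) \<and> perpl (fst (snd t)) (fst t) \<notin> L}"
  define C3 where "C3 = {t \<in> CS. fst t \<noteq> fst (snd t) \<and> perpl (fst (snd t)) (fst t) \<in> L}"
  have "CS = C1 \<union> C2 \<union> C3" unfolding C1_def C2_def C3_def by auto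
  then have "card CS = card (C1 \<union> C2 \<union> C3)" by simp
  moreover have "card (C1 \<union> C2 \<union> C3) \<le> card (C1 \<union> C2) + card C3" by (rule card_Un_le)
  moreover have "card (C1 \<union> C2) \<le> card C1 + card C2" by (rule card_Un_le)
  ultimately have "card CS \<le> card C1 + card C2 + card C3" by linarith
  then have cs: "real (card CS) \<le> real (card C1) + real (card C2) + real (card C3)" by linarith
  have c1: "real (card C1) \<le> real (card (A \<times> A)) * 1"
  proof (rule card_UN_bound[where F = "\<lambda>(x1,x2). {(x1,x1,x2)}"])
    show "C1 \<subseteq> (\<Union>x\<in>A \<times> A. case x of (x1, x2) \<Rightarrow> {(x1, x1, x2)})"
      unfolding C1_def CS_def by force
  qed (use finA in auto)
  have c2: "real (card C2) \<le> real (card (A \<times> A)) * real (card L)"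
  proof (rule card_UN_bound[where F = "\<lambda>(x0,x1). if x0 \<noteq> x1 \<and> perpl x1 x0 \<notin> L then (\<lambda>x2. (x0,x1,x2)) ` (perpl x1 x0 \<inter> A) else {}"])
    show "C2 \<subseteq> (\<Union>x\<in>A \<times> A. case x of (x0,x1) \<Rightarrow> if x0 \<noteq> x1 \<and> perpl x1 x0 \<notin> L then (\<lambda>x2. (x0,x1,x2)) ` (perpl x1 x0 \<inter> A) else {})"
    proof
      fix t assume "t \<in> C2"
      then obtain x0 x1 x2 where t: "t = (x0,x1,x2)" "x0 \<in> A" "x1 \<in> A" "x2 \<in> A" "is_corner R x0 x1 x2"
        "x0 \<noteq> x1" "perpl x1 x0 \<notin> L" unfolding C2_def CS_def by auto
      have "x2 \<in> perpl x1 x0" using t AF unfolding perpl_def is_corner_def by auto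
      then show "t \<in> (\<Union>x\<in>A \<times> A. case x of (x0,x1) \<Rightarrow> if x0 \<noteq> x1 \<and> perpl x1 x0 \<notin> L then (\<lambda>x2. (x0,x1,x2)) ` (perpl x1 x0 \<inter> A) else {})"
        using t by (intro UN_I[of "(x0,x1)"]) auto
    qed
  next
    fix x assume "x \<in> A \<times> A"
    then obtain x0 x1 where x: "x = (x0,x1)" "x0 \<in> A" "x1 \<in> A" by auto
    show "real (card (case x of (x0,x1) \<Rightarrow> if x0 \<noteq> x1 \<and> perpl x1 x0 \<notin> L then (\<lambda>x2. (x0,x1,x2)) ` (perpl x1 x0 \<inter> A) else {}))
          \<le> real (card L)"
    proof (cases "x0 \<noteq> x1 \<and> perpl x1 x0 \<notin> L")
      case True
      have ln: "is_line R (perpl x1 x0)" by (rule perpl_line) (use x AF True in auto)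
      have "card ((\<lambda>x2. (x0,x1,x2)) ` (perpl x1 x0 \<inter> A)) \<le> card (perpl x1 x0 \<inter> A)" by (rule card_image_le) (use finA in auto)
      also have "\<dots> \<le> card L + (if perpl x1 x0 \<in> L then card (Ap (perpl x1 x0)) else 0)"
        by (rule line_meet_count[OF fin L A ln])
      finally show ?thesis using True x by simp
    qed (use x in auto)
  qed (use finA in auto)
  have c3: "real (card C3) \<le> real (card (L \<times> A)) * (real (card L) + Mx)"
  proof (rule card_UN_bound[where F = "\<lambda>(l,x0). \<Union>x1\<in>{x1 \<in> A. x1 \<noteq> x0 \<and> perpl x1 x0 = l}. (\<lambda>x2. (x0,x1,x2)) ` (l \<inter> A)"])
    show "C3 \<subseteq> (\<Union>x\<in>L \<times> A. case x of (l,x0) \<Rightarrow> \<Union>x1\<in>{x1 \<in> A. x1 \<noteq> x0 \<and> perpl x1 x0 = l}. (\<lambda>x2. (x0,x1,x2)) ` (l \<inter> A))"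
    proof
      fix t assume "t \<in> C3"
      then obtain x0 x1 x2 where t: "t = (x0,x1,x2)" "x0 \<in> A" "x1 \<in> A" "x2 \<in> A" "is_corner R x0 x1 x2"
        "x0 \<noteq> x1" "perpl x1 x0 \<in> L" unfolding C3_def CS_def by auto
      have "x2 \<in> perpl x1 x0" using t AF unfolding perpl_def is_corner_def by auto
      then have "t \<in> (\<lambda>x2. (x0,x1,x2)) ` (perpl x1 x0 \<inter> A)" using t by auto
      then have "t \<in> (\<Union>x1'\<in>{x1' \<in> A. x1' \<noteq> x0 \<and> perpl x1' x0 = perpl x1 x0}. (\<lambda>x2. (x0,x1',x2)) ` (perpl x1 x0 \<inter> A))"
        using t by (intro UN_I[of x1]) simp_all
      then show "t \<in> (\<Union>x\<in>L \<times> A. case x of (l,x0) \<Rightarrow> \<Union>x1\<in>{x1 \<in> A. x1 \<noteq> x0 \<and> perpl x1 x0 = l}. (\<lambda>x2. (x0,x1,x2)) ` (l \<inter> A))"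
        using t by (intro UN_I[of "(perpl x1 x0, x0)"]) simp_all
    qed
  next
    fix x assume "x \<in> L \<times> A"
    then obtain l x0 where x: "x = (l,x0)" "l \<in> L" "x0 \<in> A" by auto
    have sub1: "card {x1 \<in> A. x1 \<noteq> x0 \<and> perpl x1 x0 = l} \<le> 1"
    proof -
      have "\<forall>a\<in>{x1 \<in> A. x1 \<noteq> x0 \<and> perpl x1 x0 = l}. \<forall>b\<in>{x1 \<in> A. x1 \<noteq> x0 \<and> perpl x1 x0 = l}. a = b"
      proof (intro ballI)
        fix a b assume a: "a \<in> {x1 \<in> A. x1 \<noteq> x0 \<and> perpl x1 x0 = l}" and b: "b \<in> {x1 \<in> A. x1 \<noteq> x0 \<and> perpl x1 x0 = l}"
        have ac: "a \<in> ?F2" "b \<in> ?F2" "x0 \<in> ?F2" using a b x AF by auto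
        have "b \<in> perpl b x0" unfolding perpl_def using ac pdot_self0[OF ac(2) psub_closed[OF ac(2) ac(3)]] by simp
        then have "b \<in> perpl a x0" using a b by simp
        then have h1: "pdot R (psub R a x0) (psub R b a) = \<zero>" unfolding perpl_def by blast
        have "a \<in> perpl a x0" unfolding perpl_def using ac pdot_self0[OF ac(1) psub_closed[OF ac(1) ac(3)]] by simp
        then have "a \<in> perpl b x0" using a b by simp
        then have h2: "pdot R (psub R b x0) (psub R a b) = \<zero>" unfolding perpl_def by blast
        show "a = b" by (rule perp_unique[OF ns ac(3) ac(1) ac(2) h1 h2])
      qed
      moreover have "finite {x1 \<in> A. x1 \<noteq> x0 \<and> perpl x1 x0 = l}" using finA by auto
      ultimately show ?thesis by (simp add: card_le_Suc0_iff_eq)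
    qed
    have "real (card (\<Union>x1\<in>{x1 \<in> A. x1 \<noteq> x0 \<and> perpl x1 x0 = l}. (\<lambda>x2. (x0,x1,x2)) ` (l \<inter> A)))
          \<le> real (card {x1 \<in> A. x1 \<noteq> x0 \<and> perpl x1 x0 = l}) * (real (card L) + Mx)"
    proof (rule card_UN_bound)
      fix x1 assume "x1 \<in> {x1 \<in> A. x1 \<noteq> x0 \<and> perpl x1 x0 = l}"
      have "card ((\<lambda>x2. (x0,x1,x2)) ` (l \<inter> A)) \<le> card (l \<inter> A)" by (rule card_image_le) (use finA in auto)
      also have "\<dots> \<le> card L + (if l \<in> L then card (Ap l) else 0)"
        by (rule line_meet_count[OF fin L A]) (use L x in auto)
      finally have n: "card ((\<lambda>x2. (x0,x1,x2)) ` (l \<inter> A)) \<le> card L + card (Ap l)" using x by simp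
      have "real (card ((\<lambda>x2. (x0,x1,x2)) ` (l \<inter> A))) \<le> real (card L) + real (card (Ap l))"
        using n by (metis of_nat_add of_nat_le_iff)
      moreover have "real (card (Ap l)) \<le> Mx" using M x(2) by blast
      ultimately show "real (card ((\<lambda>x2. (x0,x1,x2)) ` (l \<inter> A))) \<le> real (card L) + Mx" by linarith
    qed (use finA in auto)
    also have "\<dots> \<le> 1 * (real (card L) + Mx)"
    proof (rule mult_right_mono)
      show "0 \<le> real (card L) + Mx" using M x(2) by (smt (verit) of_nat_0_le_iff)
    qed (use sub1 in simp)
    finally show "real (card (case x of (l,x0) \<Rightarrow> \<Union>x1\<in>{x1 \<in> A. x1 \<noteq> x0 \<and> perpl x1 x0 = l}. (\<lambda>x2. (x0,x1,x2)) ` (l \<inter> A)))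
          \<le> real (card L) + Mx" using x by simp
  qed (use finA L in auto)
  have e1: "real (card (A \<times> A)) = real (card A)^2" by (simp add: card_cartesian_product power2_eq_square)
  have e2: "real (card (L \<times> A)) = real (card L) * real (card A)" by (simp add: card_cartesian_product)
  have c1': "real (card C1) \<le> real (card A)^2" using c1 e1 by simp
  have c2': "real (card C2) \<le> real (card A)^2 * real (card L)" using c2 e1 by simp
  have c3': "real (card C3) \<le> real (card L) * real (card A) * (real (card L) + Mx)" using c3 e2 by simp
  show ?thesis using step1 cs c1' c2' c3' by linarith
qed

end


context field
begin

lemma parl_psub_line: "p \<in> carrier R \<times> carrier R \<Longrightarrow> x \<in> carrier R \<times> carrier R \<Longrightarrow> y \<in> carrier R \<times> carrier R
   \<Longrightarrow> x \<noteq> y \<Longrightarrow> is_line R (parl R p (psub R x y))"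
  by (rule parl_line) (auto simp: psub_closed psub_eq0)

lemma parl_self: assumes "p \<in> carrier R \<times> carrier R" "v \<in> carrier R \<times> carrier R" shows "p \<in> parl R p v"
proof -
  obtain p1 p2 v1 v2 where pv: "p = (p1,p2)" "v = (v1,v2)" by (cases p, cases v)
  have "p1 \<in> carrier R" "p2 \<in> carrier R" "v1 \<in> carrier R" "v2 \<in> carrier R" using assms pv by auto
  then have "p = (fst p \<oplus> \<zero> \<otimes> fst v, snd p \<oplus> \<zero> \<otimes> snd v)" using pv by simp
  then show ?thesis by (rule parlI[rotated]) simp
qed

lemma trap_T0:
  assumes finA: "finite A" and finB: "finite B"
  shows "real (card {t \<in> {(x1, x2, x3, x4). x1 \<in> A \<and> x2 \<in> A \<and> x3 \<in> B \<and> x4 \<in> B \<and> is_trapezoid R x1 x2 x3 x4}.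
              fst t = fst (snd t)}) \<le> real (card A) * real (card B) * real (card B)"
proof -
  have "real (card {t \<in> {(x1, x2, x3, x4). x1 \<in> A \<and> x2 \<in> A \<and> x3 \<in> B \<and> x4 \<in> B \<and> is_trapezoid R x1 x2 x3 x4}.
              fst t = fst (snd t)}) \<le> real (card (A \<times> B \<times> B)) * 1"
  proof (rule card_UN_bound[where F = "\<lambda>(x1,x3,x4). {(x1,x1,x3,x4)}"])
    show "{t \<in> {(x1, x2, x3, x4). x1 \<in> A \<and> x2 \<in> A \<and> x3 \<in> B \<and> x4 \<in> B \<and> is_trapezoid R x1 x2 x3 x4}.
              fst t = fst (snd t)} \<subseteq> (\<Union>x\<in>A \<times> B \<times> B. case x of (x1,x3,x4) \<Rightarrow> {(x1,x1,x3,x4)})"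
    proof
      fix t assume "t \<in> {t \<in> {(x1, x2, x3, x4). x1 \<in> A \<and> x2 \<in> A \<and> x3 \<in> B \<and> x4 \<in> B \<and> is_trapezoid R x1 x2 x3 x4}.
              fst t = fst (snd t)}"
      then obtain x1 x2 x3 x4 where t: "t = (x1,x2,x3,x4)" "x1 \<in> A" "x3 \<in> B" "x4 \<in> B" "x1 = x2" by auto
      show "t \<in> (\<Union>x\<in>A \<times> B \<times> B. case x of (x1,x3,x4) \<Rightarrow> {(x1,x1,x3,x4)})"
        using t by (intro UN_I[of "(x1,x3,x4)"]) simp_all
    qed
  qed (use finA finB in auto)
  then show ?thesis by (simp add: card_cartesian_product)
qed

lemma trap_bound_reg:
  assumes fin: "finite (carrier R)"
    and LA: "finite LA" "\<forall>l\<in>LA. is_line R l" and A: "A = (\<Union>l\<in>LA. ApA l)" "\<forall>l\<in>LA. ApA l \<subseteq> l"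
    and MA: "\<forall>l\<in>LA. real (card (ApA l)) \<le> MxA"
    and LB: "finite LB" "\<forall>l\<in>LB. is_line R l" and B: "B = (\<Union>l\<in>LB. ApB l)" "\<forall>l\<in>LB. ApB l \<subseteq> l"
    and MB: "\<forall>l\<in>LB. real (card (ApB l)) \<le> MxB"
  shows "real (trap_count R A B) \<le> real (card A) * real (card B) * real (card B)
     + real (card A) * real (card B) * real (card B) * real (card LA)
     + real (card A) * real (card A) * real (card B) * real (card LB)
     + real (card LA) * real (card LB) * ((real (card LA) + MxA)^2 * (real (card LB) + MxB)^2)"
proof -
  let ?F2 = "carrier R \<times> carrier R"
  have AF: "A \<subseteq> ?F2" using A LA(2) line_sub by blast
  have BF: "B \<subseteq> ?F2" using B LB(2) line_sub by blast
  have finA: "finite A" using AF fin by (meson finite_SigmaI finite_subset)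
  have finB: "finite B" using BF fin by (meson finite_SigmaI finite_subset)
  define TS where "TS = {(x1, x2, x3, x4). x1 \<in> A \<and> x2 \<in> A \<and> x3 \<in> B \<and> x4 \<in> B \<and> is_trapezoid R x1 x2 x3 x4}"
  define T0 where "T0 = {t \<in> TS. fst t = fst (snd t)}"
  define T1 where "T1 = {t \<in> TS. case t of (x1,x2,x3,x4) \<Rightarrow> x1 \<noteq> x2 \<and> parl R x1 (psub R x3 x4) \<notin> LA}"
  define T2 where "T2 = {t \<in> TS. case t of (x1,x2,x3,x4) \<Rightarrow> x1 \<noteq> x2 \<and> parl R x3 (psub R x1 x2) \<notin> LB}"
  define T3 where "T3 = {t \<in> TS. case t of (x1,x2,x3,x4) \<Rightarrow> x1 \<noteq> x2 \<and> parl R x1 (psub R x3 x4) \<in> LA \<and> parl R x3 (psub R x1 x2) \<in> LB}"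
  have "TS = T0 \<union> T1 \<union> T2 \<union> T3" unfolding T0_def T1_def T2_def T3_def by auto
  then have "card TS = card (T0 \<union> T1 \<union> T2 \<union> T3)" by simp
  moreover have "card (T0 \<union> T1 \<union> T2 \<union> T3) \<le> card (T0 \<union> T1 \<union> T2) + card T3" by (rule card_Un_le)
  moreover have "card (T0 \<union> T1 \<union> T2) \<le> card (T0 \<union> T1) + card T2" by (rule card_Un_le)
  moreover have "card (T0 \<union> T1) \<le> card T0 + card T1" by (rule card_Un_le)
  ultimately have "card TS \<le> card T0 + card T1 + card T2 + card T3" by linarith
  then have ts: "real (card TS) \<le> real (card T0) + real (card T1) + real (card T2) + real (card T3)" by linarith
  have t0: "real (card T0) \<le> real (card A) * real (card B) * real (card B)"
    unfolding T0_def TS_def by (rule trap_T0[OF finA finB])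
  have t1: "real (card T1) \<le> real (card (A \<times> B \<times> B)) * real (card LA)"
  proof (rule card_UN_bound[where F = "\<lambda>(x1,x3,x4). if x3 \<noteq> x4 \<and> parl R x1 (psub R x3 x4) \<notin> LA
       then (\<lambda>x2. (x1,x2,x3,x4)) ` (parl R x1 (psub R x3 x4) \<inter> A) else {}"])
    show "T1 \<subseteq> (\<Union>x\<in>A \<times> B \<times> B. case x of (x1,x3,x4) \<Rightarrow> if x3 \<noteq> x4 \<and> parl R x1 (psub R x3 x4) \<notin> LA
       then (\<lambda>x2. (x1,x2,x3,x4)) ` (parl R x1 (psub R x3 x4) \<inter> A) else {})"
    proof
      fix t assume "t \<in> T1"
      moreover obtain x1 x2 x3 x4 where teq: "t = (x1,x2,x3,x4)" using prod_cases4 by blast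
      ultimately have tt: "x1 \<in> A \<and> x2 \<in> A \<and> x3 \<in> B \<and> x4 \<in> B \<and> is_trapezoid R x1 x2 x3 x4 \<and> x1 \<noteq> x2 \<and> parl R x1 (psub R x3 x4) \<notin> LA" unfolding T1_def TS_def by simp
      then have t: "t = (x1,x2,x3,x4)" "x1 \<in> A" "x2 \<in> A" "x3 \<in> B" "x4 \<in> B" "is_trapezoid R x1 x2 x3 x4" "x1 \<noteq> x2" "parl R x1 (psub R x3 x4) \<notin> LA" using teq by simp_all
      have tn: "x3 \<noteq> x4" "x2 \<in> parl R x1 (psub R x3 x4)" using trap_ne[OF _ _ _ _ t(6) t(7)] t AF BF by auto
      have "t \<in> (\<lambda>x2. (x1,x2,x3,x4)) ` (parl R x1 (psub R x3 x4) \<inter> A)" using t tn by auto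
      then show "t \<in> (\<Union>x\<in>A \<times> B \<times> B. case x of (x1,x3,x4) \<Rightarrow> if x3 \<noteq> x4 \<and> parl R x1 (psub R x3 x4) \<notin> LA
       then (\<lambda>x2. (x1,x2,x3,x4)) ` (parl R x1 (psub R x3 x4) \<inter> A) else {})"
        using t tn by (intro UN_I[of "(x1,x3,x4)"]) simp_all
    qed
  next
    fix x assume "x \<in> A \<times> B \<times> B"
    then obtain x1 x3 x4 where x: "x = (x1,x3,x4)" "x1 \<in> A" "x3 \<in> B" "x4 \<in> B" by auto
    show "real (card (case x of (x1,x3,x4) \<Rightarrow> if x3 \<noteq> x4 \<and> parl R x1 (psub R x3 x4) \<notin> LA
       then (\<lambda>x2. (x1,x2,x3,x4)) ` (parl R x1 (psub R x3 x4) \<inter> A) else {})) \<le> real (card LA)"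
    proof (cases "x3 \<noteq> x4 \<and> parl R x1 (psub R x3 x4) \<notin> LA")
      case True
      have ln: "is_line R (parl R x1 (psub R x3 x4))" by (rule parl_psub_line) (use x AF BF True in auto)
      have "card ((\<lambda>x2. (x1,x2,x3,x4)) ` (parl R x1 (psub R x3 x4) \<inter> A)) \<le> card (parl R x1 (psub R x3 x4) \<inter> A)"
        by (rule card_image_le) (use finA in auto)
      also have "\<dots> \<le> card LA + (if parl R x1 (psub R x3 x4) \<in> LA then card (ApA (parl R x1 (psub R x3 x4))) else 0)"
        by (rule line_meet_count[OF fin LA A ln])
      finally show ?thesis using True x by simp
    qed (use x in auto)
  qed (use finA finB in auto)
  have t2: "real (card T2) \<le> real (card (A \<times> A \<times> B)) * real (card LB)"
  proof (rule card_UN_bound[where F = "\<lambda>(x1,x2,x3). if x1 \<noteq> x2 \<and> parl R x3 (psub R x1 x2) \<notin> LB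
       then (\<lambda>x4. (x1,x2,x3,x4)) ` (parl R x3 (psub R x1 x2) \<inter> B) else {}"])
    show "T2 \<subseteq> (\<Union>x\<in>A \<times> A \<times> B. case x of (x1,x2,x3) \<Rightarrow> if x1 \<noteq> x2 \<and> parl R x3 (psub R x1 x2) \<notin> LB
       then (\<lambda>x4. (x1,x2,x3,x4)) ` (parl R x3 (psub R x1 x2) \<inter> B) else {})"
    proof
      fix t assume "t \<in> T2"
      moreover obtain x1 x2 x3 x4 where teq: "t = (x1,x2,x3,x4)" using prod_cases4 by blast
      ultimately have tt: "(x1 \<in> A) \<and> (x2 \<in> A) \<and> (x3 \<in> B) \<and> (x4 \<in> B) \<and> (is_trapezoid R x1 x2 x3 x4) \<and> (x1 \<noteq> x2) \<and> (parl R x3 (psub R x1 x2) \<notin> LB)" unfolding T2_def TS_def by simp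
      then have t: "t = (x1,x2,x3,x4)" "x1 \<in> A" "x2 \<in> A" "x3 \<in> B" "x4 \<in> B" "is_trapezoid R x1 x2 x3 x4" "x1 \<noteq> x2" "parl R x3 (psub R x1 x2) \<notin> LB" using teq by simp_all
      have tn: "x4 \<in> parl R x3 (psub R x1 x2)" using trap_ne[OF _ _ _ _ t(6) t(7)] t AF BF by auto
      have "t \<in> (\<lambda>x4. (x1,x2,x3,x4)) ` (parl R x3 (psub R x1 x2) \<inter> B)" using t tn by auto
      then show "t \<in> (\<Union>x\<in>A \<times> A \<times> B. case x of (x1,x2,x3) \<Rightarrow> if x1 \<noteq> x2 \<and> parl R x3 (psub R x1 x2) \<notin> LB
       then (\<lambda>x4. (x1,x2,x3,x4)) ` (parl R x3 (psub R x1 x2) \<inter> B) else {})"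
        using t tn by (intro UN_I[of "(x1,x2,x3)"]) simp_all
    qed
  next
    fix x assume "x \<in> A \<times> A \<times> B"
    then obtain x1 x2 x3 where x: "x = (x1,x2,x3)" "x1 \<in> A" "x2 \<in> A" "x3 \<in> B" by auto
    show "real (card (case x of (x1,x2,x3) \<Rightarrow> if x1 \<noteq> x2 \<and> parl R x3 (psub R x1 x2) \<notin> LB
       then (\<lambda>x4. (x1,x2,x3,x4)) ` (parl R x3 (psub R x1 x2) \<inter> B) else {})) \<le> real (card LB)"
    proof (cases "x1 \<noteq> x2 \<and> parl R x3 (psub R x1 x2) \<notin> LB")
      case True
      have ln: "is_line R (parl R x3 (psub R x1 x2))" by (rule parl_psub_line) (use x AF BF True in auto)
      have "card ((\<lambda>x4. (x1,x2,x3,x4)) ` (parl R x3 (psub R x1 x2) \<inter> B)) \<le> card (parl R x3 (psub R x1 x2) \<inter> B)"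
        by (rule card_image_le) (use finB in auto)
      also have "\<dots> \<le> card LB + (if parl R x3 (psub R x1 x2) \<in> LB then card (ApB (parl R x3 (psub R x1 x2))) else 0)"
        by (rule line_meet_count[OF fin LB B ln])
      finally show ?thesis using True x by simp
    qed (use x in auto)
  qed (use finA finB in auto)
  have t3: "real (card T3) \<le> real (card (LA \<times> LB)) * ((real (card LA) + MxA)^2 * (real (card LB) + MxB)^2)"
  proof (rule card_UN_bound[where F = "\<lambda>(l,m). (l \<inter> A) \<times> (l \<inter> A) \<times> (m \<inter> B) \<times> (m \<inter> B)"])
    show "T3 \<subseteq> (\<Union>x\<in>LA \<times> LB. case x of (l,m) \<Rightarrow> (l \<inter> A) \<times> (l \<inter> A) \<times> (m \<inter> B) \<times> (m \<inter> B))"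
    proof
      fix t assume "t \<in> T3"
      moreover obtain x1 x2 x3 x4 where teq: "t = (x1,x2,x3,x4)" using prod_cases4 by blast
      ultimately have tt: "(x1 \<in> A) \<and> (x2 \<in> A) \<and> (x3 \<in> B) \<and> (x4 \<in> B) \<and> (is_trapezoid R x1 x2 x3 x4) \<and> (x1 \<noteq> x2) \<and> (parl R x1 (psub R x3 x4) \<in> LA) \<and> (parl R x3 (psub R x1 x2) \<in> LB)" unfolding T3_def TS_def by simp
      then have t: "t = (x1,x2,x3,x4)" "x1 \<in> A" "x2 \<in> A" "x3 \<in> B" "x4 \<in> B" "is_trapezoid R x1 x2 x3 x4" "x1 \<noteq> x2" "parl R x1 (psub R x3 x4) \<in> LA" "parl R x3 (psub R x1 x2) \<in> LB" using teq by simp_all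
      have tn: "x2 \<in> parl R x1 (psub R x3 x4)" "x4 \<in> parl R x3 (psub R x1 x2)" using trap_ne[OF _ _ _ _ t(6) t(7)] t AF BF by auto
      have s1: "x1 \<in> parl R x1 (psub R x3 x4)" by (rule parl_self) (use t AF BF psub_closed[of x3 x4] in auto)
      have s3: "x3 \<in> parl R x3 (psub R x1 x2)" by (rule parl_self) (use t AF BF psub_closed[of x1 x2] in auto)
      show "t \<in> (\<Union>x\<in>LA \<times> LB. case x of (l,m) \<Rightarrow> (l \<inter> A) \<times> (l \<inter> A) \<times> (m \<inter> B) \<times> (m \<inter> B))"
        using t tn s1 s3 by (intro UN_I[of "(parl R x1 (psub R x3 x4), parl R x3 (psub R x1 x2))"]) simp_all
    qed
  next
    fix x assume "x \<in> LA \<times> LB"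
    then obtain l m where x: "x = (l,m)" "l \<in> LA" "m \<in> LB" by auto
    have "card (l \<inter> A) \<le> card LA + card (ApA l)" using line_meet_count[OF fin LA A, of l] x LA by simp
    then have la: "real (card (l \<inter> A)) \<le> real (card LA) + MxA" using MA x by (smt (verit) of_nat_add of_nat_le_iff)
    have "card (m \<inter> B) \<le> card LB + card (ApB m)" using line_meet_count[OF fin LB B, of m] x LB by simp
    then have lb: "real (card (m \<inter> B)) \<le> real (card LB) + MxB" using MB x by (smt (verit) of_nat_add of_nat_le_iff)
    have "real (card ((l \<inter> A) \<times> (l \<inter> A) \<times> (m \<inter> B) \<times> (m \<inter> B)))
        = real (card (l \<inter> A))^2 * real (card (m \<inter> B))^2" by (simp add: card_cartesian_product power2_eq_square)
    also have "\<dots> \<le> (real (card LA) + MxA)^2 * (real (card LB) + MxB)^2"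
      by (intro mult_mono power_mono la lb) auto
    finally show "real (card (case x of (l,m) \<Rightarrow> (l \<inter> A) \<times> (l \<inter> A) \<times> (m \<inter> B) \<times> (m \<inter> B)))
        \<le> (real (card LA) + MxA)^2 * (real (card LB) + MxB)^2" using x by simp
  qed (use finA finB LA LB in auto)
  have "trap_count R A B = card TS" unfolding trap_count_def TS_def by simp
  moreover have "real (card (A \<times> B \<times> B)) = real (card A) * real (card B) * real (card B)" by (simp add: card_cartesian_product)
  moreover have "real (card (A \<times> A \<times> B)) = real (card A) * real (card A) * real (card B)" by (simp add: card_cartesian_product)
  moreover have "real (card (LA \<times> LB)) = real (card LA) * real (card LB)" by (simp add: card_cartesian_product)
  ultimately show ?thesis using ts t0 t1 t2 t3 by (simp only:)
qed

end


context field
begin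

lemma trap_bound_irr:
  assumes fin: "finite (carrier R)" and AF: "A \<subseteq> carrier R \<times> carrier R" and BF: "B \<subseteq> carrier R \<times> carrier R"
    and irr: "irregular R B"
  shows "real (trap_count R A B) \<le> real (card A) * real (card B) * real (card B)
     + real (card A) * real (card A) * real (card B) * sqrt (real (card B))"
proof -
  have finA: "finite A" using AF fin by (meson finite_SigmaI finite_subset)
  have finB: "finite B" using BF fin by (meson finite_SigmaI finite_subset)
  define TS where "TS = {(x1, x2, x3, x4). x1 \<in> A \<and> x2 \<in> A \<and> x3 \<in> B \<and> x4 \<in> B \<and> is_trapezoid R x1 x2 x3 x4}"
  define T0 where "T0 = {t \<in> TS. fst t = fst (snd t)}"
  define T2 where "T2 = {t \<in> TS. fst t \<noteq> fst (snd t)}"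
  have "TS = T0 \<union> T2" unfolding T0_def T2_def by auto
  then have "card TS \<le> card T0 + card T2" using card_Un_le by metis
  then have ts: "real (card TS) \<le> real (card T0) + real (card T2)" by linarith
  have t0: "real (card T0) \<le> real (card A) * real (card B) * real (card B)"
    unfolding T0_def TS_def by (rule trap_T0[OF finA finB])
  have t2: "real (card T2) \<le> real (card (A \<times> A \<times> B)) * sqrt (real (card B))"
  proof (rule card_UN_bound[where F = "\<lambda>(x1,x2,x3). if x1 \<noteq> x2
       then (\<lambda>x4. (x1,x2,x3,x4)) ` (parl R x3 (psub R x1 x2) \<inter> B) else {}"])
    show "T2 \<subseteq> (\<Union>x\<in>A \<times> A \<times> B. case x of (x1,x2,x3) \<Rightarrow> if x1 \<noteq> x2
       then (\<lambda>x4. (x1,x2,x3,x4)) ` (parl R x3 (psub R x1 x2) \<inter> B) else {})"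
    proof
      fix t assume "t \<in> T2"
      moreover obtain x1 x2 x3 x4 where teq: "t = (x1,x2,x3,x4)" using prod_cases4 by blast
      ultimately have tt: "x1 \<in> A \<and> x2 \<in> A \<and> x3 \<in> B \<and> x4 \<in> B \<and> is_trapezoid R x1 x2 x3 x4 \<and> x1 \<noteq> x2" unfolding T2_def TS_def by simp
      then have t: "t = (x1,x2,x3,x4)" "x1 \<in> A" "x2 \<in> A" "x3 \<in> B" "x4 \<in> B" "is_trapezoid R x1 x2 x3 x4" "x1 \<noteq> x2" using teq by simp_all
      have tn: "x4 \<in> parl R x3 (psub R x1 x2)" using trap_ne[OF _ _ _ _ t(6) t(7)] t AF BF by auto
      have "t \<in> (\<lambda>x4. (x1,x2,x3,x4)) ` (parl R x3 (psub R x1 x2) \<inter> B)" using t tn by auto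
      then show "t \<in> (\<Union>x\<in>A \<times> A \<times> B. case x of (x1,x2,x3) \<Rightarrow> if x1 \<noteq> x2
       then (\<lambda>x4. (x1,x2,x3,x4)) ` (parl R x3 (psub R x1 x2) \<inter> B) else {})"
        using t tn by (intro UN_I[of "(x1,x2,x3)"]) simp_all
    qed
  next
    fix x assume "x \<in> A \<times> A \<times> B"
    then obtain x1 x2 x3 where x: "x = (x1,x2,x3)" "x1 \<in> A" "x2 \<in> A" "x3 \<in> B" by auto
    show "real (card (case x of (x1,x2,x3) \<Rightarrow> if x1 \<noteq> x2
       then (\<lambda>x4. (x1,x2,x3,x4)) ` (parl R x3 (psub R x1 x2) \<inter> B) else {})) \<le> sqrt (real (card B))"
    proof (cases "x1 \<noteq> x2")
      case True
      have ln: "is_line R (parl R x3 (psub R x1 x2))" by (rule parl_psub_line) (use x AF BF True in auto)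
      have "card ((\<lambda>x4. (x1,x2,x3,x4)) ` (parl R x3 (psub R x1 x2) \<inter> B)) \<le> card (parl R x3 (psub R x1 x2) \<inter> B)"
        by (rule card_image_le) (use finB in auto)
      then have "real (card ((\<lambda>x4. (x1,x2,x3,x4)) ` (parl R x3 (psub R x1 x2) \<inter> B))) \<le> real (card (parl R x3 (psub R x1 x2) \<inter> B))"
        by simp
      also have "\<dots> \<le> sqrt (real (card B))" using irr ln unfolding irregular_def by blast
      finally show ?thesis using True x by simp
    qed (use x in auto)
  qed (use finA finB in auto)
  have "trap_count R A B = card TS" unfolding trap_count_def TS_def by simp
  moreover have "real (card (A \<times> A \<times> B)) = real (card A) * real (card A) * real (card B)" by (simp add: card_cartesian_product)
  ultimately show ?thesis using ts t0 t2 by (simp only:)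
qed

end


lemma cube_le_imp: "(0::real) \<le> x \<Longrightarrow> 0 \<le> y \<Longrightarrow> x^3 \<le> y^3 \<Longrightarrow> x \<le> y"
proof (rule ccontr)
  assume a: "(0::real) \<le> x" "0 \<le> y" "x^3 \<le> y^3" "\<not> x \<le> y"
  then have "y^3 < x^3" by (intro power_strict_mono) auto
  then show False using a by simp
qed

lemma final_arith:
  fixes m q K X T c1 c2 :: real
  assumes m: "m \<ge> 1" and q: "q > 0" and K: "K \<ge> 1" and X: "X \<le> c1 * m^2 * K" and T: "T \<le> c2 * (m powr (7/2) + m^4 / K^2)"
    and c: "c1 > 0" "c2 > 0" "c1 \<le> C" "c2 \<le> C"
  shows "min (q * X) T \<le> C * (m powr (8/3) * q powr (2/3) + m powr (7/2))"
proof -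
  define s where "s = q powr (1/3)"
  define r where "r = m powr (2/3)"
  have s0: "s > 0" unfolding s_def using q by simp
  have r0: "r > 0" unfolding r_def using m by simp
  have "s^3 = s powr 3" using s0 by simp
  also have "\<dots> = q" unfolding s_def powr_powr using q by simp
  finally have s3: "s^3 = q" .
  have "r^3 = r powr 3" using r0 by simp
  also have "\<dots> = m powr 2" unfolding r_def powr_powr by simp
  also have "\<dots> = m^2" using m by simp
  finally have r3: "r^3 = m^2" .
  have "s^2 = s powr 2" using s0 by simp
  also have "\<dots> = q powr (2/3)" unfolding s_def powr_powr by simp
  finally have q23: "q powr (2/3) = s^2" by simp
  have "m powr (8/3) = m powr (2 + 2/3)" by simp
  also have "\<dots> = m powr 2 * m powr (2/3)" by (rule powr_add)
  also have "\<dots> = m^2 * r" unfolding r_def using m by simp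
  finally have m83: "m powr (8/3) = m^2 * r" .
  have m72: "m powr (7/2) \<ge> 0" by simp
  have pos: "m powr (8/3) * q powr (2/3) \<ge> 0" by simp
  show ?thesis
  proof (cases "q * K^3 \<le> m^2")
    case True
    have "(s * K)^3 \<le> r^3" using True s3 r3 by (simp add: power_mult_distrib)
    then have sK: "s * K \<le> r" using cube_le_imp s0 r0 K by (meson less_imp_le mult_nonneg_nonneg order_trans zero_le_one)
    have "q * X \<le> q * (c1 * m^2 * K)" using X q by simp
    also have "\<dots> = c1 * m^2 * s^2 * (s * K)" using s3 by (simp add: power3_eq_cube power2_eq_square algebra_simps)
    also have "\<dots> \<le> c1 * m^2 * s^2 * r" using sK c(1) by (intro mult_left_mono) auto
    also have "\<dots> = c1 * (m powr (8/3) * q powr (2/3))" using m83 q23 by simp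
    also have "\<dots> \<le> C * (m powr (8/3) * q powr (2/3))" using c pos by (intro mult_right_mono) auto
    also have "\<dots> \<le> C * (m powr (8/3) * q powr (2/3) + m powr (7/2))" using c m72 by (intro mult_left_mono) auto
    finally show ?thesis by simp
  next
    case False
    have "r^3 \<le> (s * K)^3" using False s3 r3 by (simp add: power_mult_distrib)
    then have sK: "r \<le> s * K" using cube_le_imp s0 r0 K by (meson less_imp_le mult_nonneg_nonneg order_trans zero_le_one)
    then have "r^2 \<le> (s*K)^2" using r0 by (intro power_mono) auto
    have K2: "K^2 > 0" using K by simp
    have "m^4 / K^2 = m^2 * r * (r^2 / K^2)"
    proof -
      have "m^4 = m^2 * r^3" using r3 by (simp add: power_def)
      then show ?thesis by (simp add: power3_eq_cube power2_eq_square)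
    qed
    also have "r^2 / K^2 \<le> s^2"
    proof -
      have "r^2 \<le> s^2 * K^2" using \<open>r^2 \<le> (s*K)^2\<close> by (simp add: power_mult_distrib)
      then show ?thesis using K2 by (simp add: divide_le_eq)
    qed
    then have "m^2 * r * (r^2 / K^2) \<le> m^2 * r * s^2" using r0 by (intro mult_left_mono) auto
    finally have mk: "m^4 / K^2 \<le> m powr (8/3) * q powr (2/3)" using m83 q23 by simp
    have "T \<le> c2 * (m powr (7/2) + m powr (8/3) * q powr (2/3))" using T mk c(2) by (smt (verit) mult_left_mono)
    also have "\<dots> = c2 * (m powr (8/3) * q powr (2/3) + m powr (7/2))" by simp
    also have "\<dots> \<le> C * (m powr (8/3) * q powr (2/3) + m powr (7/2))" using c pos m72 by (intro mult_right_mono) auto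
    finally show ?thesis by simp
  qed
qed


lemma k2_le: assumes "(k::real) > 0" "k \<le> C0 * sqrt a" "a \<ge> 0" "C0 \<ge> 0" shows "k^2 \<le> C0^2 * a"
proof -
  have "k^2 \<le> (C0 * sqrt a)^2" using assms by (intro power_mono) auto
  also have "\<dots> = C0^2 * a" using assms by (simp add: power_mult_distrib)
  finally show ?thesis .
qed

lemma rect_real:
  fixes C0 k K a n Rc :: real
  assumes C0: "C0 \<ge> 1" and k: "k > 0" "k \<le> C0 * sqrt a" and a: "a \<ge> 0" and n: "0 \<le> n" "n \<le> C0 * k"
    and K: "k \<le> K" "1 \<le> K" and Rc: "Rc \<le> a^2 + a^2 * n + n * a * (n + C0 * a / k)"
  shows "Rc \<le> 4 * C0^4 * K * a^2"
proof -
  have k2: "k^2 \<le> C0^2 * a" using k2_le k a C0 by auto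
  have t2: "a^2 * n \<le> a^2 * (C0 * K)"
  proof -
    have "n \<le> C0 * K" using n K C0 by (smt (verit) mult_left_mono)
    then show ?thesis using a by (intro mult_left_mono) auto
  qed
  have t3: "n * a * (n + C0 * a / k) \<le> (C0 * k) * a * (C0 * k + C0 * a / k)"
  proof -
    have "0 \<le> C0 * a / k" using C0 a k by simp
    then have "n + C0 * a / k \<le> C0 * k + C0 * a / k" "0 \<le> n + C0 * a / k" using n by auto
    moreover have "n * a \<le> C0 * k * a" using n a by (intro mult_right_mono) auto
    ultimately show ?thesis using n a by (intro mult_mono) auto
  qed
  have e3: "(C0 * k) * a * (C0 * k + C0 * a / k) = C0^2 * k^2 * a + C0^2 * a^2"
    using k by (simp add: field_simps power2_eq_square)
  have "C0^2 * k^2 * a \<le> C0^2 * (C0^2 * a) * a" using k2 a by (intro mult_right_mono mult_left_mono) auto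
  then have t3': "n * a * (n + C0 * a / k) \<le> C0^4 * a^2 + C0^2 * a^2"
    using t3 e3 by (simp add: power2_eq_square power4_eq_xxxx algebra_simps)
  have "Rc \<le> a^2 * (1 + C0 * K + C0^4 + C0^2)" using Rc t2 t3' by (simp add: algebra_simps)
  also have "\<dots> \<le> a^2 * (4 * C0^4 * K)"
  proof -
    have c1: "1 \<le> C0^4 * K" using C0 K by (metis mult_mono' one_le_power mult_1_left zero_le_one order_trans)
    have c2: "C0 * K \<le> C0^4 * K" using C0 K by (intro mult_right_mono) (auto intro: self_le_power[of C0 4, simplified])
    have c3: "C0^4 \<le> C0^4 * K" using C0 K by (simp add: mult_le_cancel_left1)
    have c4: "C0^2 \<le> C0^4 * K"
    proof -
      have "C0^2 \<le> C0^4" using C0 by (intro power_increasing) auto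
      then show ?thesis using c3 by linarith
    qed
    show ?thesis using c1 c2 c3 c4 by (intro mult_left_mono) auto
  qed
  finally show ?thesis by (simp add: algebra_simps)
qed


lemma sq3: "((x::real) + y + z)^2 \<le> 3 * (x^2 + y^2 + z^2)"
proof -
  have "0 \<le> (x - y)^2 + (y - z)^2 + (x - z)^2" by simp
  then show ?thesis by (simp add: power2_eq_square algebra_simps)
qed

lemma trap_real:
  fixes C0 k K a b m nA nB T :: real
  assumes C0: "C0 \<ge> 1" and m: "m \<ge> 1" and a: "0 \<le> a" "a \<le> 2 * m" and b: "0 \<le> b" "b \<le> 2 * m"
    and k: "k > 0" "k \<le> C0 * sqrt a" "C0 * k \<ge> 1" and K: "K = max k 1"
    and nA: "0 \<le> nA" "nA \<le> C0 * k" and nB: "0 \<le> nB" "nB \<le> C0 * k"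
    and T: "T \<le> a * b * b + a * b * b * nA + a * a * b * nB + nA * nB * ((nA + C0 * a / k)^2 * (nB + C0 * b / k)^2)"
  shows "T \<le> 160 * C0^12 * (m powr (7/2) + m^4 / K^2)"
proof -
  define P where "P = m powr (7/2)"
  define Q where "Q = m^4 / K^2"
  have sm: "sqrt m \<ge> 1" using m by simp
  have "m powr (7/2) = m powr (3 + 1/2)" by simp
  also have "\<dots> = m powr 3 * m powr (1/2)" by (rule powr_add)
  also have "\<dots> = m^3 * sqrt m" using m by (simp add: powr_half_sqrt)
  finally have P: "P = m^3 * sqrt m" unfolding P_def .
  have m3P: "m^3 \<le> P" unfolding P using sm m by (simp add: mult_le_cancel_left1)
  have m30: "0 \<le> m^3" using m by simp
  have K1: "K \<ge> 1" "K > 0" using K by auto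
  have Q0: "0 \<le> Q" unfolding Q_def by simp
  have C0p: "\<And>j. j \<le> 12 \<Longrightarrow> C0^j \<le> C0^12" using C0 by (intro power_increasing) auto
  have sa: "sqrt a \<le> 2 * sqrt m"
  proof -
    have "sqrt a \<le> sqrt (4 * m)" using a m by simp
    also have "\<dots> = 2 * sqrt m" by (simp add: real_sqrt_mult)
    finally show ?thesis .
  qed
  have nAb: "nA \<le> 2 * C0^2 * sqrt m"
  proof -
    have "nA \<le> C0 * (C0 * sqrt a)" using nA k C0 by (smt (verit) mult_left_mono)
    also have "\<dots> \<le> C0 * (C0 * (2 * sqrt m))" using sa C0 by (intro mult_left_mono) auto
    finally show ?thesis by (simp add: power2_eq_square)
  qed
  have nBb: "nB \<le> 2 * C0^2 * sqrt m"
  proof -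
    have "nB \<le> C0 * (C0 * sqrt a)" using nB k C0 by (smt (verit) mult_left_mono)
    also have "\<dots> \<le> C0 * (C0 * (2 * sqrt m))" using sa C0 by (intro mult_left_mono) auto
    finally show ?thesis by (simp add: power2_eq_square)
  qed
  have abb: "a * b * b \<le> 8 * m^3"
  proof -
    have "a * b * b \<le> (2*m) * (2*m) * (2*m)" using a b by (intro mult_mono) auto
    then show ?thesis by (simp add: power3_eq_cube)
  qed
  have aab: "a * a * b \<le> 8 * m^3"
  proof -
    have "a * a * b \<le> (2*m) * (2*m) * (2*m)" using a b by (intro mult_mono) auto
    then show ?thesis by (simp add: power3_eq_cube)
  qed
  have s2: "a * b * b * nA \<le> 16 * C0^2 * P"
  proof -
    have "a * b * b * nA \<le> (8 * m^3) * (2 * C0^2 * sqrt m)" by (rule mult_mono[OF abb nAb]) (use m nA in auto)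
    then show ?thesis unfolding P by (simp add: algebra_simps)
  qed
  have s3: "a * a * b * nB \<le> 16 * C0^2 * P"
  proof -
    have "a * a * b * nB \<le> (8 * m^3) * (2 * C0^2 * sqrt m)" by (rule mult_mono[OF aab nBb]) (use m nB in auto)
    then show ?thesis unfolding P by (simp add: algebra_simps)
  qed
  have k2: "k^2 \<le> C0^2 * a" using k2_le k a C0 by auto
  have ik: "1 / k^2 \<le> C0^2 / K^2"
  proof (cases "k \<ge> 1")
    case True
    then have "K = k" using K by simp
    then show ?thesis using C0 k by (simp add: divide_right_mono)
  next
    case False
    then have "K = 1" using K by simp
    have "1 \<le> (C0 * k)^2" using k C0 by (simp add: one_le_power)
    then have "1 \<le> C0^2 * k^2" by (simp add: power_mult_distrib)
    then show ?thesis using \<open>K = 1\<close> k by (simp add: field_simps)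
  qed
  have ua: "0 \<le> C0 * a / k" "0 \<le> C0 * b / k" using C0 a b k by auto
  have s4a: "nA * nB * ((nA + C0 * a / k)^2 * (nB + C0 * b / k)^2)
      \<le> (C0 * k) * (C0 * k) * ((C0 * k + C0 * a / k)^2 * (C0 * k + C0 * b / k)^2)"
  proof -
    have "(nA + C0 * a / k)^2 \<le> (C0 * k + C0 * a / k)^2" using nA ua by (intro power_mono) auto
    moreover have "(nB + C0 * b / k)^2 \<le> (C0 * k + C0 * b / k)^2" using nB ua by (intro power_mono) auto
    moreover have "nA * nB \<le> (C0 * k) * (C0 * k)" using nA nB by (intro mult_mono) auto
    ultimately show ?thesis using nA nB by (intro mult_mono) auto
  qed
  have e4: "(C0 * k) * (C0 * k) * ((C0 * k + C0 * a / k)^2 * (C0 * k + C0 * b / k)^2)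
      = C0^6 * (k^3 + (a + b) * k + a * b / k)^2"
  proof -
    have h1: "C0 * k + C0 * a / k = C0 * (k + a / k)" "C0 * k + C0 * b / k = C0 * (k + b / k)" by (simp_all add: algebra_simps)
    have h2: "k * (k + a / k) * (k + b / k) = k^3 + (a + b) * k + a * b / k"
      using k by (simp add: field_simps power3_eq_cube)
    have h3: "(C0 * k) * (C0 * k) * ((C0 * (k + a / k))^2 * (C0 * (k + b / k))^2) = C0^6 * (k * (k + a / k) * (k + b / k))^2"
      by (simp add: power_mult_distrib power2_eq_square eval_nat_numeral ac_simps)
    show ?thesis unfolding h1 h3 h2 ..
  qed
  have s4b: "(k^3 + (a + b) * k + a * b / k)^2 \<le> 3 * ((k^3)^2 + ((a + b) * k)^2 + (a * b / k)^2)" by (rule sq3)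
  have f1: "(k^3)^2 \<le> 8 * C0^6 * m^3"
  proof -
    have "(k^3)^2 = (k^2)^3" by (simp add: power_mult[symmetric] mult.commute)
    also have "\<dots> \<le> (C0^2 * a)^3" using k2 k by (intro power_mono) auto
    also have "\<dots> = C0^6 * a^3" by (simp add: power_mult_distrib power_mult[symmetric])
    also have "\<dots> \<le> C0^6 * (2*m)^3" using a by (intro mult_left_mono power_mono) auto
    finally show ?thesis by (simp add: power_mult_distrib)
  qed
  have f2: "((a + b) * k)^2 \<le> 32 * C0^2 * m^3"
  proof -
    have "((a + b) * k)^2 = (a+b)^2 * k^2" by (simp add: power_mult_distrib)
    also have "\<dots> \<le> (4*m)^2 * (C0^2 * (2*m))"
      using a b k2 C0 by (intro mult_mono power_mono) (auto intro: order_trans[OF k2] mult_left_mono)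
    finally show ?thesis by (simp add: power2_eq_square power3_eq_cube algebra_simps)
  qed
  have f3: "(a * b / k)^2 \<le> 16 * C0^2 * Q"
  proof -
    have "(a * b / k)^2 = (a * b)^2 * (1 / k^2)" by (simp add: power_divide)
    also have "\<dots> \<le> (4 * m^2)^2 * (C0^2 / K^2)"
    proof (rule mult_mono)
      have "a * b \<le> (2*m) * (2*m)" using a b by (intro mult_mono) auto
      then show "(a * b)^2 \<le> (4 * m^2)^2" using a b by (intro power_mono) (auto simp: power2_eq_square)
    qed (use ik in auto)
    finally show ?thesis unfolding Q_def by (simp add: power2_eq_square power4_eq_xxxx ac_simps)
  qed
  have s4: "nA * nB * ((nA + C0 * a / k)^2 * (nB + C0 * b / k)^2)
       \<le> C0^6 * (3 * (8 * C0^6 * m^3 + 32 * C0^2 * m^3 + 16 * C0^2 * Q))"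
  proof -
    have "(k^3 + (a + b) * k + a * b / k)^2 \<le> 3 * (8 * C0^6 * m^3 + 32 * C0^2 * m^3 + 16 * C0^2 * Q)"
    proof -
      have "(k^3)^2 + ((a + b) * k)^2 + (a * b / k)^2 \<le> 8 * C0^6 * m^3 + 32 * C0^2 * m^3 + 16 * C0^2 * Q"
        using f1 f2 f3 by (intro add_mono)
      then have "3 * ((k^3)^2 + ((a + b) * k)^2 + (a * b / k)^2) \<le> 3 * (8 * C0^6 * m^3 + 32 * C0^2 * m^3 + 16 * C0^2 * Q)"
        by simp
      then show ?thesis using s4b by (rule order_trans[rotated])
    qed
    then have "C0^6 * (k^3 + (a + b) * k + a * b / k)^2 \<le> C0^6 * (3 * (8 * C0^6 * m^3 + 32 * C0^2 * m^3 + 16 * C0^2 * Q))"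
      using C0 by (intro mult_left_mono) auto
    then show ?thesis using s4a e4 by linarith
  qed
  have s4': "nA * nB * ((nA + C0 * a / k)^2 * (nB + C0 * b / k)^2) \<le> 24 * C0^12 * P + 96 * C0^12 * P + 48 * C0^12 * Q"
  proof -
    have "C0^6 * (3 * (8 * C0^6 * m^3 + 32 * C0^2 * m^3 + 16 * C0^2 * Q)) = 24 * C0^12 * m^3 + 96 * C0^8 * m^3 + 48 * C0^8 * Q"
      by (simp add: algebra_simps power_add[symmetric])
    moreover have "C0^12 * m^3 \<le> C0^12 * P" using m3P C0 by (intro mult_left_mono) auto
    moreover have "C0^8 * m^3 \<le> C0^12 * P" using m3P C0p[of 8] m30 by (intro mult_mono) auto
    moreover have "C0^8 * Q \<le> C0^12 * Q" using C0p[of 8] Q0 by (intro mult_right_mono) auto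
    ultimately show ?thesis using s4 by linarith
  qed
  have P0: "0 \<le> P" using m3P m30 by linarith
  have "C0^2 * P \<le> C0^12 * P" using C0p[of 2] P0 by (intro mult_right_mono) auto
  moreover have "m^3 \<le> C0^12 * P"
  proof -
    have "1 * P \<le> C0^12 * P" by (rule mult_right_mono) (use C0 P0 in \<open>auto simp: one_le_power\<close>)
    then show ?thesis using m3P by linarith
  qed
  ultimately have "T \<le> 160 * C0^12 * P + 48 * C0^12 * Q" using T abb s2 s3 s4' by linarith
  also have "\<dots> \<le> 160 * C0^12 * (P + Q)" using Q0 C0 by (simp add: algebra_simps)
  finally show ?thesis unfolding P_def Q_def .
qed


context field
begin

lemma main_bound:
  fixes C0 m :: real
  assumes C0: "C0 \<ge> 1" and fin: "finite (carrier R)" and ns: "\<not> (\<exists>x\<in>carrier R. x \<otimes> x = \<ominus> \<one>)"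
    and m: "m \<ge> 1" and AF: "A \<subseteq> carrier R \<times> carrier R" and BF: "B \<subseteq> carrier R \<times> carrier R"
    and ca: "m / 2 \<le> real (card A)" "real (card A) \<le> 2 * m"
    and cb: "m / 2 \<le> real (card B)" "real (card B) \<le> 2 * m"
    and H: "(\<exists>k. k_regular R C0 k A \<and> k_regular R C0 k B) \<or> (irregular R A \<and> irregular R B)"
  shows "min (real (card (carrier R)) * sqrt (real (rect_count R A) * real (rect_count R B)))
             (real (trap_count R A B))
         \<le> (200 * C0^12) * (m powr (8/3) * real (card (carrier R)) powr (2/3) + m powr (7/2))"
proof -
  define a where "a = real (card A)"
  define b where "b = real (card B)"
  define q where "q = real (card (carrier R))"
  define P where "P = m powr (7/2)"
  have q0: "q > 0" unfolding q_def using fin zero_closed card_gt_0_iff by (metis of_nat_0_less_iff empty_iff)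
  have P0: "0 \<le> P" unfolding P_def by simp
  have pos: "0 \<le> m powr (8/3) * q powr (2/3)" by simp
  have a0: "0 \<le> a" "a \<le> 2 * m" "m / 2 \<le> a" using ca unfolding a_def by auto
  have b0: "0 \<le> b" "b \<le> 2 * m" "m / 2 \<le> b" using cb unfolding b_def by auto
  have sm: "sqrt m \<ge> 1" using m by simp
  have "m powr (7/2) = m powr (3 + 1/2)" by simp
  also have "\<dots> = m powr 3 * m powr (1/2)" by (rule powr_add)
  also have "\<dots> = m^3 * sqrt m" using m by (simp add: powr_half_sqrt)
  finally have Pe: "P = m^3 * sqrt m" unfolding P_def .
  have m3P: "m^3 \<le> P" unfolding Pe using sm m by (simp add: mult_le_cancel_left1)
  have C12: "1 \<le> C0^12" using C0 by (simp add: one_le_power)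
  then have C24: "24 \<le> 200 * C0^12" by linarith
  have "C0^4 \<le> C0^12" using C0 by (intro power_increasing) auto
  then have C16: "16 * C0^4 \<le> 200 * C0^12" using C12 by linarith
  show ?thesis
  proof (cases "irregular R A \<and> irregular R B")
    case True
    have T: "real (trap_count R A B) \<le> a * b * b + a * a * b * sqrt b"
      unfolding a_def b_def by (rule trap_bound_irr[OF fin AF BF]) (use True in auto)
    have abb: "a * b * b \<le> 8 * m^3"
    proof -
      have "a * b * b \<le> (2*m) * (2*m) * (2*m)" using a0 b0 by (intro mult_mono) auto
      then show ?thesis by (simp add: power3_eq_cube)
    qed
    have aab: "a * a * b \<le> 8 * m^3"
    proof -
      have "a * a * b \<le> (2*m) * (2*m) * (2*m)" using a0 b0 by (intro mult_mono) auto
      then show ?thesis by (simp add: power3_eq_cube)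
    qed
    have sb: "sqrt b \<le> 2 * sqrt m"
    proof -
      have "sqrt b \<le> sqrt (4 * m)" using b0 m by simp
      also have "\<dots> = 2 * sqrt m" by (simp add: real_sqrt_mult)
      finally show ?thesis .
    qed
    have "a * a * b * sqrt b \<le> (8 * m^3) * (2 * sqrt m)" by (rule mult_mono[OF aab sb]) (use m b0 in auto)
    then have "a * a * b * sqrt b \<le> 16 * P" unfolding Pe by simp
    then have "real (trap_count R A B) \<le> 24 * P" using T abb m3P by linarith
    also have "\<dots> \<le> (200 * C0^12) * P" using C24 P0 by (intro mult_right_mono) auto
    also have "\<dots> \<le> (200 * C0^12) * (m powr (8/3) * q powr (2/3) + P)" using C0 pos by (intro mult_left_mono) auto
    finally show ?thesis unfolding q_def P_def by linarith
  next
    case False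
    then obtain k where kA: "k_regular R C0 k A" and kB: "k_regular R C0 k B" using H by blast
    obtain LA ApA where LA: "finite LA" "\<forall>l\<in>LA. is_line R l" "k / C0 \<le> real (card LA)" "real (card LA) \<le> C0 * k"
        "A = (\<Union>l\<in>LA. ApA l)" "\<forall>l\<in>LA. ApA l \<subseteq> l \<and> real (card A) / (C0 * k) \<le> real (card (ApA l))
                 \<and> real (card (ApA l)) \<le> C0 * real (card A) / k"
      and kaA: "k \<le> C0 * sqrt (real (card A))"
      using kA unfolding k_regular_def by blast
    obtain LB ApB where LB: "finite LB" "\<forall>l\<in>LB. is_line R l" "k / C0 \<le> real (card LB)" "real (card LB) \<le> C0 * k"
        "B = (\<Union>l\<in>LB. ApB l)" "\<forall>l\<in>LB. ApB l \<subseteq> l \<and> real (card B) / (C0 * k) \<le> real (card (ApB l))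
                 \<and> real (card (ApB l)) \<le> C0 * real (card B) / k"
      and kbB: "k \<le> C0 * sqrt (real (card B))"
      using kB unfolding k_regular_def by blast
    have "card A > 0" using ca m by linarith
    then have "A \<noteq> {}" by auto
    then have "LA \<noteq> {}" using LA(5) by auto
    then have "card LA \<ge> 1" using LA(1) by (simp add: Suc_le_eq card_gt_0_iff)
    then have Ck: "C0 * k \<ge> 1" using LA(4) by linarith
    have kpos: "k > 0" by (rule ccontr) (use Ck C0 mult_nonneg_nonpos[of C0 k] in linarith)
    define K where "K = max k 1"
    have K1: "K \<ge> 1" "k \<le> K" unfolding K_def by auto
    have rA: "real (rect_count R A) \<le> a^2 + a^2 * real (card LA) + real (card LA) * a * (real (card LA) + C0 * a / k)"
      unfolding a_def by (rule rect_bound[OF fin ns LA(1,2,5)]) (use LA(6) in auto)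
    have rB: "real (rect_count R B) \<le> b^2 + b^2 * real (card LB) + real (card LB) * b * (real (card LB) + C0 * b / k)"
      unfolding b_def by (rule rect_bound[OF fin ns LB(1,2,5)]) (use LB(6) in auto)
    have RA: "real (rect_count R A) \<le> 4 * C0^4 * K * a^2"
    proof -
      have ka: "k \<le> C0 * sqrt a" using kaA unfolding a_def .
      show ?thesis by (rule rect_real[OF C0 kpos ka a0(1) _ LA(4) K1(2) K1(1) rA]) simp
    qed
    have RB: "real (rect_count R B) \<le> 4 * C0^4 * K * b^2"
    proof -
      have kb: "k \<le> C0 * sqrt b" using kbB unfolding b_def .
      show ?thesis by (rule rect_real[OF C0 kpos kb b0(1) _ LB(4) K1(2) K1(1) rB]) simp
    qed
    have X: "sqrt (real (rect_count R A) * real (rect_count R B)) \<le> (16 * C0^4) * m^2 * K"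
    proof -
      have "real (rect_count R A) * real (rect_count R B) \<le> (4 * C0^4 * K * a^2) * (4 * C0^4 * K * b^2)"
        by (rule mult_mono[OF RA RB]) (use C0 K1 in auto)
      also have "\<dots> = (4 * C0^4 * K * a * b)^2" by (simp add: power2_eq_square ac_simps)
      finally have sq: "real (rect_count R A) * real (rect_count R B) \<le> (4 * C0^4 * K * a * b)^2" .
      have nn: "0 \<le> 4 * C0^4 * K * a * b" using C0 K1 a0 b0 by simp
      have "sqrt (real (rect_count R A) * real (rect_count R B)) \<le> sqrt ((4 * C0^4 * K * a * b)^2)"
        using sq by (rule real_sqrt_le_mono)
      also have "\<dots> = 4 * C0^4 * K * a * b" using nn by simp
      also have "\<dots> \<le> 4 * C0^4 * K * (2 * m) * (2 * m)"
        using C0 K1 a0 b0 by (intro mult_mono) auto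
      finally show ?thesis by (simp add: power2_eq_square ac_simps)
    qed
    have Tr: "real (trap_count R A B) \<le> a * b * b + a * b * b * real (card LA) + a * a * b * real (card LB)
        + real (card LA) * real (card LB) * ((real (card LA) + C0 * a / k)^2 * (real (card LB) + C0 * b / k)^2)"
      unfolding a_def b_def by (rule trap_bound_reg[OF fin LA(1,2,5) _ _ LB(1,2,5)]) (use LA(6) LB(6) in auto)
    have T: "real (trap_count R A B) \<le> (160 * C0^12) * (m powr (7/2) + m^4 / K^2)"
    proof -
      have ka: "k \<le> C0 * sqrt a" using kaA unfolding a_def .
      show ?thesis by (rule trap_real[OF C0 m a0(1,2) b0(1,2) kpos ka Ck K_def _ LA(4) _ LB(4) Tr]) simp_all
    qed
    show ?thesis
      unfolding q_def[symmetric]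
      by (rule final_arith[OF m q0 K1(1) X T]) (use C0 C12 C16 in \<open>auto intro: mult_left_mono one_le_power simp: power_increasing\<close>)
  qed
qed

end


theorem proposition4p4:
  fixes C0 :: real
  assumes "C0 \<ge> 1"
  shows "\<exists>C>0. \<forall>(R :: ('a, 'b) ring_scheme) (m :: real) (A :: ('a \<times> 'a) set) B.
     field R \<longrightarrow> finite (carrier R)
     \<longrightarrow> \<one>\<^bsub>R\<^esub> \<oplus>\<^bsub>R\<^esub> \<one>\<^bsub>R\<^esub> \<noteq> \<zero>\<^bsub>R\<^esub>
     \<longrightarrow> \<not> (\<exists>x\<in>carrier R. x \<otimes>\<^bsub>R\<^esub> x = \<ominus>\<^bsub>R\<^esub> \<one>\<^bsub>R\<^esub>)
     \<longrightarrow> m \<ge> 1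
     \<longrightarrow> A \<subseteq> carrier R \<times> carrier R \<longrightarrow> B \<subseteq> carrier R \<times> carrier R
     \<longrightarrow> m / 2 \<le> real (card A) \<longrightarrow> real (card A) \<le> 2 * m
     \<longrightarrow> m / 2 \<le> real (card B) \<longrightarrow> real (card B) \<le> 2 * m
     \<longrightarrow> ((\<exists>k. k_regular R C0 k A \<and> k_regular R C0 k B) \<or> (irregular R A \<and> irregular R B))
     \<longrightarrow> min (real (card (carrier R)) * sqrt (real (rect_count R A) * real (rect_count R B)))
             (real (trap_count R A B))
         \<le> C * (m powr (8/3) * real (card (carrier R)) powr (2/3) + m powr (7/2))"
proof (rule exI[of _ "200 * C0^12"], rule conjI)
  show "0 < 200 * C0^12" using assms by simp
next
  show "\<forall>(R :: ('a, 'b) ring_scheme) (m :: real) (A :: ('a \<times> 'a) set) B.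
     field R \<longrightarrow> finite (carrier R)
     \<longrightarrow> \<one>\<^bsub>R\<^esub> \<oplus>\<^bsub>R\<^esub> \<one>\<^bsub>R\<^esub> \<noteq> \<zero>\<^bsub>R\<^esub>
     \<longrightarrow> \<not> (\<exists>x\<in>carrier R. x \<otimes>\<^bsub>R\<^esub> x = \<ominus>\<^bsub>R\<^esub> \<one>\<^bsub>R\<^esub>)
     \<longrightarrow> m \<ge> 1
     \<longrightarrow> A \<subseteq> carrier R \<times> carrier R \<longrightarrow> B \<subseteq> carrier R \<times> carrier R
     \<longrightarrow> m / 2 \<le> real (card A) \<longrightarrow> real (card A) \<le> 2 * m
     \<longrightarrow> m / 2 \<le> real (card B) \<longrightarrow> real (card B) \<le> 2 * m
     \<longrightarrow> ((\<exists>k. k_regular R C0 k A \<and> k_regular R C0 k B) \<or> (irregular R A \<and> irregular R B))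
     \<longrightarrow> min (real (card (carrier R)) * sqrt (real (rect_count R A) * real (rect_count R B)))
             (real (trap_count R A B))
         \<le> (200 * C0^12) * (m powr (8/3) * real (card (carrier R)) powr (2/3) + m powr (7/2))"
  proof (intro allI impI)
    fix R :: "('a, 'b) ring_scheme" and m :: real and A B :: "('a \<times> 'a) set"
    assume h: "field R" "finite (carrier R)" "\<one>\<^bsub>R\<^esub> \<oplus>\<^bsub>R\<^esub> \<one>\<^bsub>R\<^esub> \<noteq> \<zero>\<^bsub>R\<^esub>"
      "\<not> (\<exists>x\<in>carrier R. x \<otimes>\<^bsub>R\<^esub> x = \<ominus>\<^bsub>R\<^esub> \<one>\<^bsub>R\<^esub>)" "m \<ge> 1"
      "A \<subseteq> carrier R \<times> carrier R" "B \<subseteq> carrier R \<times> carrier R"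
      "m / 2 \<le> real (card A)" "real (card A) \<le> 2 * m" "m / 2 \<le> real (card B)" "real (card B) \<le> 2 * m"
      "(\<exists>k. k_regular R C0 k A \<and> k_regular R C0 k B) \<or> (irregular R A \<and> irregular R B)"
    show "min (real (card (carrier R)) * sqrt (real (rect_count R A) * real (rect_count R B)))
             (real (trap_count R A B))
         \<le> (200 * C0^12) * (m powr (8/3) * real (card (carrier R)) powr (2/3) + m powr (7/2))"
      by (rule field.main_bound[OF h(1) assms h(2) h(4) h(5) h(6) h(7) h(8) h(9) h(10) h(11) h(12)])
  qed
qed

end
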